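(* Consider the RSA algorithm run for $N-1$ iterations from $x_1\in X$ with constant stepsizes $\gamma=\dfrac{D_X}{\sqrt{2(M_2^2+L^2)}\sqrt N}$, where $D_X=\max_{x\in X}\|x-x_1\|_2$, and let $g^N=\frac1N\sum_{\tau=1}^Ng(x_\tau,\xi_\tau)$. Let $$K_1(X)=\frac{D_X(M_2^2+2L^2)}{\sqrt{2(M_2^2+L^2)}},\qquad K_2(X)=\frac{D_XM_2^2}{\sqrt{2(M_2^2+L^2)}}+2D_XM_2+M_1.$$ (i) If Assumptions 1, 2, 3 and 4 hold (with $\|\cdot\|_*=\|\cdot\|_2$), then for every $\Theta>0$, $$\mathbb P\Big(|g^N-f(x_* )|>\frac{K_1(X)+\Theta K_2(X)}{\sqrt N}\Big)\le 4\exp\{1\}\exp\{-\Theta\}.$$ (ii) If Assumptions 1, 2, 3 and 5 hold, the same inequality holds with right-hand side replaced by $(3+\exp\{1\})\exp\{-\Theta^2/4\}$.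
   Context: Setting: $E=\mathbb R^n$ with $\|\cdot\|=\|\cdot\|_*=\|\cdot\|_2$; $X\subset E$ nonempty closed bounded convex; $g(x,\xi)$ Borel, convex in $x$, integrable in $\xi$; $f(x)=\mathbb E[g(x,\xi)]$ convex Lipschitz on $X$ with minimizer $x_*$ on $X$; $\xi_1,\xi_2,\dots$ i.i.d. copies of $\xi$; the oracle returns $g(x,\xi_t)$ and a measurable $G(x,\xi_t)\in\partial_xg(x,\xi_t)$; $f'(x):=\mathbb E[G(x,\xi)]$, $\delta(x,\xi)=g(x,\xi)-f(x)$, $\Delta(x,\xi)=G(x,\xi)-f'(x)$. RSA: $x_{t+1}=\Pi_X(x_t-\gamma G(x_t,\xi_t))$, $t=1,\dots,N-1$, $\Pi_X$ Euclidean projection. Assumption 1: $\|f'(x)\|_*\le L$ for all $x\in X$. Assumption 2: $f(x)=\mathbb E[g(x,\xi)]$, $\mathbb E[G(x,\xi)]\in\partial f(x)$. Assumption 3: $\mathbb E[\delta^2(x,\xi)]\le M_1^2$, $\mathbb E[\|\Delta(x,\xi)\|_*^2]\le M_2^2$ for all $x\in X$. Assumption 4: $\mathbb E[\exp\{\delta^2(x,\xi)/M_1^2\}]\le\exp\{1\}$ and $\mathbb E[\exp\{\|\Delta(x,\xi)\|_*^2/M_2^2\}]\le\exp\{1\}$ for all $x\in X$. Assumption 5: $\mathbb E[\exp\{\delta^2(x,\xi)/M_1^2\}]\le\exp\{1\}$ and $\|\Delta(x,\xi)\|_*\le M_2$ almost surely, for all $x\in X$. Here $M_1,M_2\in(0,\infty)$.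 *)

theory Defs
  imports "HOL-Probability.Probability"
begin

definition is_subgradient :: "(real^'n \<Rightarrow> real) \<Rightarrow> real^'n \<Rightarrow> real^'n \<Rightarrow> bool" where
  "is_subgradient h x v \<longleftrightarrow> (\<forall>y. h y \<ge> h x + v \<bullet> (y - x))"

text \<open>RSA iterates: rsa X G gam x1 xi w k is the iterate x_(k+1) of the paper,
  i.e. rsa ... 0 = x_1 and x_(t+1) = Pi_X(x_t - gam G(x_t, xi_t)).\<close>
primrec rsa :: "(real^'n) set \<Rightarrow> (real^'n \<Rightarrow> 'b \<Rightarrow> real^'n) \<Rightarrow> real \<Rightarrow> real^'n
                \<Rightarrow> (nat \<Rightarrow> 'w \<Rightarrow> 'b) \<Rightarrow> 'w \<Rightarrow> nat \<Rightarrow> real^'n" where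
  "rsa X G gam x1 xi w 0 = x1"
| "rsa X G gam x1 xi w (Suc k) =
     closest_point X (rsa X G gam x1 xi w k - gam *\<^sub>R G (rsa X G gam x1 xi w k) (xi (Suc k) w))"

end

theory Submission
  imports Defs
begin


lemma exp_le_sq: "exp (y::real) \<le> y + exp (y^2)"
proof -
  have e2: "1 + y^2 \<le> exp (y^2)" using exp_ge_add_one_self by simp
  consider "y > 1" | "0 \<le> y" "y \<le> 1" | "-1 \<le> y" "y < 0" | "y < -1" by linarith
  then show ?thesis
  proof cases
    case 1
    then have "y \<le> y^2" by (simp add: power2_eq_square)
    then have "exp y \<le> exp (y^2)" by simp
    then show ?thesis using 1 by linarith
  next
    case 2
    then have "exp y \<le> 1 + y + y^2" using exp_bound by simp
    then show ?thesis using e2 by linarith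
  next
    case 3
    define u where "u = -y"
    have u: "0 \<le> u" "u \<le> 1" using 3 u_def by auto
    have a: "1 + u + u^2/2 \<le> exp u" using u exp_lower_Taylor_quadratic by simp
    have b: "1 \<le> (1 - u + u^2) * (1 + u + u^2/2)"
    proof -
      have "(1 - u + u^2) * (1 + u + u^2/2) = 1 + u^2/2 + u^3/2 + u^4/2"
        by (simp add: field_simps power2_eq_square power3_eq_cube power4_eq_xxxx)
      moreover have "0 \<le> u^2/2 + u^3/2 + u^4/2" using u by simp
      ultimately show ?thesis by linarith
    qed
    have pos: "0 < 1 + u + u^2/2" using u by (simp add: add_pos_nonneg)
    have "exp y = inverse (exp u)" using u_def by (simp add: exp_minus)
    also have "\<dots> \<le> inverse (1 + u + u^2/2)" using a pos by (simp add: le_imp_inverse_le)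
    also have "\<dots> \<le> 1 - u + u^2" using b pos by (simp add: field_simps)
    finally have "exp y \<le> 1 + y + y^2" using u_def by simp
    then show ?thesis using e2 by linarith
  next
    case 4
    have "exp y \<le> 1" using 4 by simp
    moreover have "0 \<le> y * (y + 1)" using 4 by (intro mult_nonpos_nonpos) auto
    then have "0 \<le> y + y^2" by (simp add: algebra_simps power2_eq_square)
    ultimately show ?thesis using e2 by linarith
  qed
qed

lemma (in prob_space) nn_exp_pow:
  assumes u[measurable]: "u \<in> borel_measurable M"
    and B: "(\<integral>\<^sup>+s. ennreal (exp (u s)) \<partial>M) \<le> ennreal (exp 1)" and p: "0 \<le> p" "p \<le> 1"
  shows "(\<integral>\<^sup>+s. ennreal (exp (p * u s)) \<partial>M) \<le> ennreal (exp p)"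
proof -
  have pt: "exp (p * u s) \<le> (1-p)*exp p + (p*exp(p-1)) * exp (u s)" for s
  proof -
    have "exp ((1 - p) *\<^sub>R 0 + p *\<^sub>R (u s - 1)) \<le> (1-p) * exp 0 + p*exp(u s - 1)"
      using convex_onD[OF exp_convex, of p 0 "u s - 1"] p by simp
    then have a: "exp(p*u s - p) \<le> p*exp(u s - 1) + (1-p)" by (simp add: algebra_simps)
    have "exp (p * u s) = exp p * exp(p*u s - p)" by (simp flip: exp_add)
    also have "\<dots> \<le> exp p * (p*exp(u s - 1) + (1-p))" using a by simp
    also have "\<dots> = (1-p)*exp p + (p*exp(p-1)) * exp (u s)"
      by (simp add: algebra_simps flip: exp_add)
    finally show ?thesis .
  qed
  have "(\<integral>\<^sup>+s. ennreal (exp (p * u s)) \<partial>M) \<le>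
        (\<integral>\<^sup>+s. ennreal ((1-p)*exp p) + ennreal (p*exp(p-1)) * ennreal (exp (u s)) \<partial>M)"
    using pt p by (intro nn_integral_mono) (simp flip: ennreal_plus ennreal_mult)
  also have "\<dots> = ennreal ((1-p)*exp p) + ennreal (p*exp(p-1)) * (\<integral>\<^sup>+s. ennreal (exp (u s)) \<partial>M)"
    by (simp add: nn_integral_add nn_integral_cmult emeasure_space_1)
  also have "\<dots> \<le> ennreal ((1-p)*exp p) + ennreal (p*exp(p-1)) * ennreal (exp 1)"
    using B by (intro add_mono mult_left_mono) auto
  also have "\<dots> = ennreal (exp p)"
    using p by (simp flip: ennreal_plus ennreal_mult exp_add add: algebra_simps)
  finally show ?thesis .
qed

lemma (in prob_space) subgauss:
  assumes Y[measurable]: "Y \<in> borel_measurable M" and int: "integrable M Y" and mean: "(\<integral>s. Y s \<partial>M) = 0"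
    and \<sigma>: "\<sigma> > 0" and B: "(\<integral>\<^sup>+s. ennreal (exp ((Y s)^2 / \<sigma>^2)) \<partial>M) \<le> ennreal (exp 1)"
  shows "(\<integral>\<^sup>+s. ennreal (exp (l * Y s)) \<partial>M) \<le> ennreal (exp (l^2 * \<sigma>^2))"
proof (cases "l^2 * \<sigma>^2 \<le> 1")
  case True
  define p where "p = l^2 * \<sigma>^2"
  have p: "0 \<le> p" "p \<le> 1" using True p_def by auto
  have E: "(\<integral>\<^sup>+s. ennreal (exp (p * ((Y s)^2 / \<sigma>^2))) \<partial>M) \<le> ennreal (exp p)"
    by (rule nn_exp_pow[OF _ B p]) simp
  have pe: "p * ((Y s)^2 / \<sigma>^2) = (l * Y s)^2" for s
    using \<sigma> by (simp add: p_def power_mult_distrib field_simps)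
  define E where "E s = exp ((l * Y s)^2)" for s
  have E': "(\<integral>\<^sup>+s. ennreal (E s) \<partial>M) \<le> ennreal (exp p)" using E pe by (simp add: E_def)
  have Em[measurable]: "E \<in> borel_measurable M" unfolding E_def by simp
  have Eint: "integrable M E"
    by (rule integrableI_bounded) (use E' in \<open>auto simp: E_def top.not_eq_extremum intro: le_less_trans\<close>)
  have "(\<integral>\<^sup>+s. ennreal (exp (l * Y s)) \<partial>M) \<le> (\<integral>\<^sup>+s. ennreal (l * Y s + E s) \<partial>M)"
    by (intro nn_integral_mono ennreal_leI) (simp add: E_def exp_le_sq)
  also have "\<dots> = ennreal (\<integral>s. l * Y s + E s \<partial>M)"
  proof (rule nn_integral_eq_integral)
    show "integrable M (\<lambda>s. l * Y s + E s)" using int Eint by auto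
    show "AE x in M. 0 \<le> l * Y x + E x"
    proof (rule AE_I2)
      fix x have "exp (l * Y x) \<le> l * Y x + E x" by (simp add: E_def exp_le_sq)
      moreover have "0 < exp (l * Y x)" by simp
      ultimately show "0 \<le> l * Y x + E x" by linarith
    qed
  qed
  also have "(\<integral>s. l * Y s + E s \<partial>M) = (\<integral>s. E s \<partial>M)"
    using int Eint mean by simp
  also have "ennreal (\<integral>s. E s \<partial>M) = (\<integral>\<^sup>+s. ennreal (E s) \<partial>M)"
    by (rule nn_integral_eq_integral[symmetric]) (use Eint in \<open>auto simp: E_def[abs_def]\<close>)
  finally show ?thesis using E' p_def by simp
next
  case False
  have pt: "exp (l * Y s) \<le> exp (l^2*\<sigma>^2/2) * exp ((1/2) * ((Y s)^2 / \<sigma>^2))" for s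
  proof -
    have "0 \<le> (l*\<sigma> - Y s/\<sigma>)^2" by simp
    also have "(l*\<sigma> - Y s/\<sigma>)^2 = l^2*\<sigma>^2 - 2*(l * Y s) + (Y s)^2/\<sigma>^2"
      using \<sigma> by (simp add: power2_eq_square field_simps)
    finally have "l * Y s \<le> l^2*\<sigma>^2/2 + (1/2) * ((Y s)^2 / \<sigma>^2)" by simp
    then show ?thesis by (simp flip: exp_add)
  qed
  have "(\<integral>\<^sup>+s. ennreal (exp (l * Y s)) \<partial>M) \<le>
      (\<integral>\<^sup>+s. ennreal (exp (l^2*\<sigma>^2/2)) * ennreal (exp ((1/2) * ((Y s)^2 / \<sigma>^2))) \<partial>M)"
    using pt by (intro nn_integral_mono) (simp flip: ennreal_mult)
  also have "\<dots> = ennreal (exp (l^2*\<sigma>^2/2)) * (\<integral>\<^sup>+s. ennreal (exp ((1/2) * ((Y s)^2 / \<sigma>^2))) \<partial>M)"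
    by (simp add: nn_integral_cmult)
  also have "\<dots> \<le> ennreal (exp (l^2*\<sigma>^2/2)) * ennreal (exp (1/2))"
    by (intro mult_left_mono nn_exp_pow[OF _ B]) auto
  also have "\<dots> \<le> ennreal (exp (l^2*\<sigma>^2))"
    using False by (simp flip: ennreal_mult exp_add)
  finally show ?thesis .
qed


definition xt :: "(real^'n) set \<Rightarrow> (real^'n \<Rightarrow> 'b \<Rightarrow> real^'n) \<Rightarrow> real \<Rightarrow> real^'n \<Rightarrow> nat \<Rightarrow> (nat \<Rightarrow> 'b) \<Rightarrow> real^'n" where
  "xt X G gam x1 k h = rsa X G gam x1 (\<lambda>i (_::unit). h i) () k"

lemma xt_simps: "xt X G gam x1 0 h = x1"
  "xt X G gam x1 (Suc k) h = closest_point X (xt X G gam x1 k h - gam *\<^sub>R G (xt X G gam x1 k h) (h (Suc k)))"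
  by (simp_all add: xt_def)

lemma rsa_local: "k \<le> n \<Longrightarrow> rsa X G gam x1 \<xi> \<omega> k = xt X G gam x1 k (restrict (\<lambda>i. \<xi> i \<omega>) {1..n})"
  by (induction k) (auto simp: xt_simps)

lemma xt_in: "closed X \<Longrightarrow> X \<noteq> {} \<Longrightarrow> x1 \<in> X \<Longrightarrow> xt X G gam x1 k h \<in> X"
  by (cases k) (auto simp: xt_simps closest_point_in_set)

lemma rsa_in: "closed X \<Longrightarrow> X \<noteq> {} \<Longrightarrow> x1 \<in> X \<Longrightarrow> rsa X G gam x1 \<xi> \<omega> k \<in> X"
  by (cases k) (auto simp: closest_point_in_set)

lemma xt_meas:
  assumes G_meas: "(\<lambda>(x, s). G x s) \<in> borel_measurable (borel \<Otimes>\<^sub>M S)"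
    and X: "X \<noteq> {}" "closed X" "convex X"
  shows "k \<le> n \<Longrightarrow> xt X G gam x1 k \<in> borel_measurable (PiM {1..n} (\<lambda>_. S))"
proof (induction k)
  case 0 then show ?case by (simp add: xt_simps)
next
  case (Suc k)
  have cp: "closest_point X \<in> borel_measurable borel"
    by (intro borel_measurable_continuous_onI continuous_on_closest_point X)
  have IH: "xt X G gam x1 k \<in> borel_measurable (PiM {1..n} (\<lambda>_. S))" using Suc by simp
  have c: "(\<lambda>h. h (Suc k)) \<in> measurable (PiM {1..n} (\<lambda>_. S)) S"
    using Suc.prems by (intro measurable_component_singleton) auto
  have "(\<lambda>h. (\<lambda>(x, s). G x s) (xt X G gam x1 k h, h (Suc k))) \<in> borel_measurable (PiM {1..n} (\<lambda>_. S))"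
    by (rule measurable_compose[OF measurable_Pair[OF IH c] G_meas])
  then have "(\<lambda>h. G (xt X G gam x1 k h) (h (Suc k))) \<in> borel_measurable (PiM {1..n} (\<lambda>_. S))" by simp
  then have "(\<lambda>h. xt X G gam x1 k h - gam *\<^sub>R G (xt X G gam x1 k h) (h (Suc k))) \<in> borel_measurable (PiM {1..n} (\<lambda>_. S))"
    using IH by measurable
  from measurable_compose[OF this cp] show ?case by (simp add: xt_simps)
qed

lemma seq_mgf:
  fixes M :: "'w measure" and S :: "'b measure" and P :: "'b measure"
    and \<xi> :: "nat \<Rightarrow> 'w \<Rightarrow> 'b" and X :: "(real^'n) set"
    and G :: "real^'n \<Rightarrow> 'b \<Rightarrow> real^'n" and \<psi> :: "nat \<Rightarrow> real^'n \<Rightarrow> 'b \<Rightarrow> real"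
  assumes M: "prob_space M"
    and \<xi>_meas: "\<And>t. t \<ge> 1 \<Longrightarrow> \<xi> t \<in> measurable M S"
    and \<xi>_distr: "\<And>t. t \<ge> 1 \<Longrightarrow> distr M S (\<xi> t) = P"
    and \<xi>_indep: "prob_space.indep_vars M (\<lambda>_. S) \<xi> {1..}"
    and X: "X \<noteq> {}" "closed X" "convex X" and x1: "x1 \<in> X"
    and G_meas: "(\<lambda>(x, s). G x s) \<in> borel_measurable (borel \<Otimes>\<^sub>M S)"
    and \<psi>m: "\<And>t. (\<lambda>(x, s). \<psi> t x s) \<in> borel_measurable (borel \<Otimes>\<^sub>M S)"
    and \<psi>b: "\<And>t x. x \<in> X \<Longrightarrow> (\<integral>\<^sup>+s. ennreal (exp (\<psi> t x s)) \<partial>P) \<le> ennreal C"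
  shows "(\<integral>\<^sup>+\<omega>. ennreal (exp (\<Sum>t=1..n. \<psi> t (rsa X G gam x1 \<xi> \<omega> (t-1)) (\<xi> t \<omega>))) \<partial>M) \<le> ennreal C ^ n"
proof -
  interpret prob_space M by (rule M)
  define H where "H n \<omega> = restrict (\<lambda>i. \<xi> i \<omega>) {1..n}" for n \<omega>
  define Sh where "Sh n h = (\<Sum>t=1..n. \<psi> t (xt X G gam x1 (t-1) h) (h t))" for n h
  have Hm: "H n \<in> measurable M (PiM {1..n} (\<lambda>_. S))" for n
    unfolding H_def by (intro measurable_restrict \<xi>_meas) auto
  have xtm: "k \<le> n \<Longrightarrow> xt X G gam x1 k \<in> borel_measurable (PiM {1..n} (\<lambda>_. S))" for k n
    by (rule xt_meas[OF G_meas X(1,2,3)])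
  have \<psi>comp: "(\<lambda>h. \<psi> t (xt X G gam x1 k h) (h j)) \<in> borel_measurable (PiM {1..n} (\<lambda>_. S))"
    if "k \<le> n" "j \<in> {1..n}" for t k j n
  proof -
    have c: "(\<lambda>h. h j) \<in> measurable (PiM {1..n} (\<lambda>_. S)) S"
      using that by (intro measurable_component_singleton) auto
    show ?thesis using measurable_compose[OF measurable_Pair[OF xtm[OF that(1)] c] \<psi>m[of t]] by simp
  qed
  have Shm: "Sh n \<in> borel_measurable (PiM {1..n} (\<lambda>_. S))" for n
    unfolding Sh_def by (intro borel_measurable_sum \<psi>comp) auto
  have sumeq: "(\<Sum>t=1..n. \<psi> t (rsa X G gam x1 \<xi> \<omega> (t-1)) (\<xi> t \<omega>)) = Sh n (H n \<omega>)" for n \<omega>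
    unfolding Sh_def H_def
  proof (intro sum.cong refl)
    fix t assume t: "t \<in> {1..n}"
    have "rsa X G gam x1 \<xi> \<omega> (t-1) = xt X G gam x1 (t-1) (restrict (\<lambda>i. \<xi> i \<omega>) {1..n})"
      using t by (intro rsa_local) auto
    then show "\<psi> t (rsa X G gam x1 \<xi> \<omega> (t-1)) (\<xi> t \<omega>) = \<psi> t (xt X G gam x1 (t-1) (restrict (\<lambda>i. \<xi> i \<omega>) {1..n})) (restrict (\<lambda>i. \<xi> i \<omega>) {1..n} t)"
      using t by simp
  qed
  have P: "prob_space P" using \<xi>_distr[of 1] \<xi>_meas[of 1] by (metis order_refl prob_space_distr)
  interpret P: prob_space P by (rule P)
  have setsP: "sets P = sets S" using \<xi>_distr[of 1] by (metis order_refl sets_distr)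
  have \<psi>S: "(\<lambda>s. \<psi> t x s) \<in> borel_measurable S" for t x
  proof -
    have "(\<lambda>s. (x, s)) \<in> measurable S (borel \<Otimes>\<^sub>M S)" by simp
    from measurable_compose[OF this \<psi>m[of t]] show ?thesis by simp
  qed
  have \<psi>P: "(\<lambda>s. \<psi> t x s) \<in> borel_measurable P" for t x
    using \<psi>S[of t x] by (subst measurable_cong_sets[OF setsP refl])
  show ?thesis
  proof (induction n)
    case 0 then show ?case by (simp add: emeasure_space_1)
  next
    case (Suc n)
    define K where "K = (\<lambda>(h, s). ennreal (exp (Sh n h)) * ennreal (exp (\<psi> (Suc n) (xt X G gam x1 n h) s)))"
    have Km: "K \<in> borel_measurable (PiM {1..n} (\<lambda>_. S) \<Otimes>\<^sub>M S)"
    proof -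
      have a: "(\<lambda>z. Sh n (fst z)) \<in> borel_measurable (PiM {1..n} (\<lambda>_. S) \<Otimes>\<^sub>M S)"
        by (rule measurable_compose[OF measurable_fst Shm])
      have b: "(\<lambda>z. (xt X G gam x1 n (fst z), snd z)) \<in> measurable (PiM {1..n} (\<lambda>_. S) \<Otimes>\<^sub>M S) (borel \<Otimes>\<^sub>M S)"
        by (intro measurable_Pair measurable_compose[OF measurable_fst xtm] measurable_snd) auto
      have c: "(\<lambda>z. \<psi> (Suc n) (xt X G gam x1 n (fst z)) (snd z)) \<in> borel_measurable (PiM {1..n} (\<lambda>_. S) \<Otimes>\<^sub>M S)"
        using measurable_compose[OF b \<psi>m[of "Suc n"]] by simp
      show ?thesis unfolding K_def using a c by (simp add: case_prod_beta')
    qed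
    define R where "R \<omega> = restrict (\<lambda>i. \<xi> i \<omega>) {Suc n}" for \<omega>
    define Q where "Q = distr M (PiM {Suc n} (\<lambda>_. S)) R"
    define D where "D = distr M (PiM {1..n} (\<lambda>_. S)) (H n)"
    define K' where "K' = (\<lambda>(h, r). K (h, r (Suc n)))"
    have Rm: "R \<in> measurable M (PiM {Suc n} (\<lambda>_. S))"
      unfolding R_def by (intro measurable_restrict \<xi>_meas) auto
    have ind: "indep_var (PiM {1..n} (\<lambda>_. S)) (H n) (PiM {Suc n} (\<lambda>_. S)) R"
      unfolding H_def[abs_def] R_def[abs_def] by (intro indep_var_restrict[OF \<xi>_indep]) auto
    then have dist: "D \<Otimes>\<^sub>M Q = distr M (PiM {1..n} (\<lambda>_. S) \<Otimes>\<^sub>M PiM {Suc n} (\<lambda>_. S)) (\<lambda>\<omega>. (H n \<omega>, R \<omega>))"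
      unfolding D_def Q_def by (simp add: indep_var_distribution_eq)
    interpret Q: prob_space Q unfolding Q_def by (intro prob_space_distr Rm)
    have pairm: "(\<lambda>\<omega>. (H n \<omega>, R \<omega>)) \<in> measurable M (PiM {1..n} (\<lambda>_. S) \<Otimes>\<^sub>M PiM {Suc n} (\<lambda>_. S))"
      by (intro measurable_Pair Hm Rm)
    have projm: "(\<lambda>r. r (Suc n)) \<in> measurable (PiM {Suc n} (\<lambda>_. S)) S"
      by (intro measurable_component_singleton) auto
    have K'm: "K' \<in> borel_measurable (PiM {1..n} (\<lambda>_. S) \<Otimes>\<^sub>M PiM {Suc n} (\<lambda>_. S))"
    proof -
      have "(\<lambda>z. (fst z, snd z (Suc n))) \<in> measurable (PiM {1..n} (\<lambda>_. S) \<Otimes>\<^sub>M PiM {Suc n} (\<lambda>_. S)) (PiM {1..n} (\<lambda>_. S) \<Otimes>\<^sub>M S)"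
        by (intro measurable_Pair measurable_fst measurable_compose[OF measurable_snd projm])
      from measurable_compose[OF this Km] show ?thesis by (simp add: K'_def case_prod_beta')
    qed
    have K'mDQ: "K' \<in> borel_measurable (D \<Otimes>\<^sub>M Q)"
      using K'm by (subst measurable_cong_sets[OF sets_pair_measure_cong]) (auto simp: D_def Q_def)
    have "(\<integral>\<^sup>+\<omega>. ennreal (exp (\<Sum>t=1..Suc n. \<psi> t (rsa X G gam x1 \<xi> \<omega> (t-1)) (\<xi> t \<omega>))) \<partial>M)
        = (\<integral>\<^sup>+\<omega>. K' (H n \<omega>, R \<omega>) \<partial>M)"
    proof (intro nn_integral_cong)
      fix \<omega>
      have "(\<Sum>t=1..Suc n. \<psi> t (rsa X G gam x1 \<xi> \<omega> (t-1)) (\<xi> t \<omega>))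
          = (\<Sum>t=1..n. \<psi> t (rsa X G gam x1 \<xi> \<omega> (t-1)) (\<xi> t \<omega>)) + \<psi> (Suc n) (rsa X G gam x1 \<xi> \<omega> n) (\<xi> (Suc n) \<omega>)"
        by simp
      also have "\<dots> = Sh n (H n \<omega>) + \<psi> (Suc n) (xt X G gam x1 n (H n \<omega>)) (\<xi> (Suc n) \<omega>)"
        unfolding sumeq by (simp add: H_def rsa_local[of n n])
      finally show "ennreal (exp (\<Sum>t=1..Suc n. \<psi> t (rsa X G gam x1 \<xi> \<omega> (t-1)) (\<xi> t \<omega>))) = K' (H n \<omega>, R \<omega>)"
        by (simp add: K'_def K_def R_def exp_add ennreal_mult)
    qed
    also have "\<dots> = (\<integral>\<^sup>+z. K' z \<partial>distr M (PiM {1..n} (\<lambda>_. S) \<Otimes>\<^sub>M PiM {Suc n} (\<lambda>_. S)) (\<lambda>\<omega>. (H n \<omega>, R \<omega>)))"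
      by (rule nn_integral_distr[symmetric, OF pairm], unfold measurable_distr_eq1, rule K'm)
    also have "\<dots> = (\<integral>\<^sup>+z. K' z \<partial>(D \<Otimes>\<^sub>M Q))"
      by (simp add: dist)
    also have "\<dots> = (\<integral>\<^sup>+h. \<integral>\<^sup>+r. K' (h, r) \<partial>Q \<partial>D)"
      by (rule Q.nn_integral_fst[symmetric, OF K'mDQ])
    also have "\<dots> = (\<integral>\<^sup>+h. \<integral>\<^sup>+s. K (h, s) \<partial>P \<partial>D)"
    proof (intro nn_integral_cong)
      fix h
      have Kh: "(\<lambda>s. K (h, s)) \<in> borel_measurable S"
      proof -
        have "(\<lambda>s. (xt X G gam x1 n h, s)) \<in> measurable S (borel \<Otimes>\<^sub>M S)" by simp
        from measurable_compose[OF this \<psi>m[of "Suc n"]]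
        have "(\<lambda>s. \<psi> (Suc n) (xt X G gam x1 n h) s) \<in> borel_measurable S" by simp
        then show ?thesis unfolding K_def by simp
      qed
      have "distr Q S (\<lambda>r. r (Suc n)) = distr M S (\<xi> (Suc n))"
        unfolding Q_def using Rm projm by (subst distr_distr) (auto simp: R_def comp_def)
      then have QP: "distr Q S (\<lambda>r. r (Suc n)) = P" using \<xi>_distr[of "Suc n"] by simp
      have "(\<integral>\<^sup>+r. K' (h, r) \<partial>Q) = (\<integral>\<^sup>+s. K (h, s) \<partial>distr Q S (\<lambda>r. r (Suc n)))"
        by (subst nn_integral_distr) (auto simp: K'_def Kh projm Q_def)
      then show "(\<integral>\<^sup>+r. K' (h, r) \<partial>Q) = (\<integral>\<^sup>+s. K (h, s) \<partial>P)" by (simp add: QP)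
    qed
    also have "\<dots> \<le> (\<integral>\<^sup>+h. ennreal (exp (Sh n h)) * ennreal C \<partial>D)"
    proof (intro nn_integral_mono)
      fix h
      have "(\<integral>\<^sup>+s. K (h, s) \<partial>P) = ennreal (exp (Sh n h)) * (\<integral>\<^sup>+s. ennreal (exp (\<psi> (Suc n) (xt X G gam x1 n h) s)) \<partial>P)"
        unfolding K_def using \<psi>P by (simp add: nn_integral_cmult)
      also have "\<dots> \<le> ennreal (exp (Sh n h)) * ennreal C"
        by (intro mult_left_mono \<psi>b xt_in X x1) auto
      finally show "(\<integral>\<^sup>+s. K (h, s) \<partial>P) \<le> ennreal (exp (Sh n h)) * ennreal C" .
    qed
    also have "\<dots> = (\<integral>\<^sup>+\<omega>. ennreal (exp (Sh n (H n \<omega>))) * ennreal C \<partial>M)"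
      unfolding D_def using Shm Hm by (subst nn_integral_distr) auto
    also have "\<dots> = (\<integral>\<^sup>+\<omega>. ennreal (exp (\<Sum>t=1..n. \<psi> t (rsa X G gam x1 \<xi> \<omega> (t-1)) (\<xi> t \<omega>))) \<partial>M) * ennreal C"
      using Shm Hm unfolding sumeq by (simp add: nn_integral_multc)
    also have "\<dots> \<le> ennreal C ^ n * ennreal C"
      by (intro mult_right_mono Suc.IH) auto
    finally show ?case by (simp add: mult.commute)
  qed
qed


lemma norm_sub_scale_sq:
  fixes u v :: "'a::real_inner"
  shows "(norm (u - r *\<^sub>R v))\<^sup>2 = (norm u)\<^sup>2 - 2*r*(v \<bullet> u) + r\<^sup>2*(norm v)\<^sup>2"
  unfolding power2_norm_eq_inner
  by (simp add: inner_diff_left inner_diff_right inner_commute power2_eq_square algebra_simps)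

lemma det_bound:
  fixes y :: "nat \<Rightarrow> real^'n" and e :: "nat \<Rightarrow> 'b" and G :: "real^'n \<Rightarrow> 'b \<Rightarrow> real^'n"
    and Gb :: "real^'n \<Rightarrow> real^'n" and N :: nat and M1 M2 \<Theta> D L c \<gamma> :: real
  assumes X: "closed X" "convex X" "X \<noteq> {}" and x1: "x1 \<in> X" and xs: "xstar \<in> X"
    and Xb: "\<And>x. x \<in> X \<Longrightarrow> norm (x - x1) \<le> D"
    and A2': "\<And>x. x \<in> X \<Longrightarrow> f xstar \<ge> f x + Gb x \<bullet> (xstar - x)"
    and A1': "\<And>x. x \<in> X \<Longrightarrow> norm (Gb x) \<le> L"
    and fmin: "\<And>x. x \<in> X \<Longrightarrow> f xstar \<le> f x"
    and y0: "y 0 = x1" and ys: "\<And>k. y (Suc k) = closest_point X (y k - \<gamma> *\<^sub>R G (y k) (e k))"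
    and \<gamma>: "\<gamma> = D / (c * sqrt N)" and c: "c = sqrt (2*(M2\<^sup>2+L\<^sup>2))" and M: "M1 > 0" "M2 > 0"
    and N: "N \<ge> 1" and \<Theta>: "\<Theta> > 0"
    and h1: "(\<Sum>k<N. g (y k) (e k) - f (y k)) \<le> \<Theta>*M1* sqrt N"
    and h2: "-(\<Sum>k<N. g (y k) (e k) - f (y k)) \<le> \<Theta>*M1* sqrt N"
    and h3: "(\<Sum>k<N. (G (y k) (e k) - Gb (y k)) \<bullet> (xstar - y k)) \<le> 2*D*M2*\<Theta>* sqrt N"
    and h4: "(\<Sum>k<N. (norm (G (y k) (e k) - Gb (y k)))\<^sup>2) \<le> \<Theta>*N*M2\<^sup>2"
  shows "\<bar>(1/N) * (\<Sum>k<N. g (y k) (e k)) - f xstar\<bar>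
     \<le> (D*(M2\<^sup>2+2*L\<^sup>2)/c + \<Theta>*(D*M2\<^sup>2/c + 2*D*M2 + M1)) / sqrt N"
proof -
  have yin: "y k \<in> X" for k by (cases k) (auto simp: y0 ys x1 closest_point_in_set X)
  have D0: "0 \<le> D" using Xb[OF x1] by simp
  have L0: "0 \<le> L" using A1'[OF x1] norm_ge_zero[of "Gb x1"] by linarith
  have sN: "sqrt N > 0" "(sqrt N)^2 = N" using N by auto
  have cpos: "c > 0" using c M by (simp add: add_pos_nonneg)
  have c2: "c^2 = 2*(M2\<^sup>2+L\<^sup>2)" using c by (simp add: add_nonneg_nonneg)
  define Sd where "Sd = (\<Sum>k<N. g (y k) (e k) - f (y k))"
  define Sf where "Sf = (\<Sum>k<N. f (y k) - f xstar)"
  define T where "T = (D*(M2\<^sup>2+2*L\<^sup>2)/c + \<Theta>*(D*M2\<^sup>2/c + 2*D*M2 + M1)) / sqrt N"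
  have Npos: "real N > 0" using N by simp
  have eq: "(1/N) * (\<Sum>k<N. g (y k) (e k)) - f xstar = (Sd + Sf) / N"
  proof -
    have "Sd + Sf = (\<Sum>k<N. g (y k) (e k)) - N * f xstar"
      unfolding Sd_def Sf_def by (simp add: sum.distrib[symmetric] sum_subtractf)
    then show ?thesis using Npos by (simp add: field_simps)
  qed
  have Sf0: "0 \<le> Sf" unfolding Sf_def by (intro sum_nonneg) (simp add: fmin yin)
  have NT: "N * T = sqrt N * (D*(M2\<^sup>2+2*L\<^sup>2)/c + \<Theta>*(D*M2\<^sup>2/c + 2*D*M2 + M1))"
  proof -
    have "N * T = (N / sqrt N) * (D*(M2\<^sup>2+2*L\<^sup>2)/c + \<Theta>*(D*M2\<^sup>2/c + 2*D*M2 + M1))"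
      unfolding T_def by simp
    then show ?thesis by (simp add: real_div_sqrt)
  qed
  have Tlow: "\<Theta>*M1* sqrt N \<le> N * T"
  proof -
    have "0 \<le> D*(M2\<^sup>2+2*L\<^sup>2)/c + \<Theta>*(D*M2\<^sup>2/c + 2*D*M2)"
      using D0 cpos \<Theta> M by (intro add_nonneg_nonneg mult_nonneg_nonneg divide_nonneg_pos) auto
    then have "\<Theta>*M1 \<le> D*(M2\<^sup>2+2*L\<^sup>2)/c + \<Theta>*(D*M2\<^sup>2/c + 2*D*M2 + M1)"
      by (simp add: algebra_simps)
    then show ?thesis unfolding NT using sN by (simp add: mult.commute mult_left_mono)
  qed
  have Sfup: "Sd + Sf \<le> N * T"
  proof (cases "D = 0")
    case True
    have "y k = xstar" for k using Xb[OF yin[of k]] Xb[OF xs] True by simp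
    then have "Sf = 0" unfolding Sf_def by simp
    then show ?thesis using h1 Tlow unfolding Sd_def by simp
  next
    case False
    then have Dp: "D > 0" using D0 by simp
    have gp: "\<gamma> > 0" using \<gamma> Dp cpos sN by simp
    define Gk where "Gk k = G (y k) (e k)" for k
    define Dk where "Dk k = G (y k) (e k) - Gb (y k)" for k
    define a where "a k = (norm (y k - xstar))\<^sup>2" for k
    have step: "Gk k \<bullet> (y k - xstar) \<le> (a k - a (Suc k)) / (2*\<gamma>) + \<gamma>/2 * (norm (Gk k))\<^sup>2" for k
    proof -
      have "norm (y (Suc k) - xstar) \<le> norm ((y k - \<gamma> *\<^sub>R Gk k) - xstar)"
        using closest_point_lipschitz[OF X(2,1,3), of "y k - \<gamma> *\<^sub>R Gk k" xstar]
        by (simp add: ys Gk_def closest_point_self[OF xs] dist_norm)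
      then have "a (Suc k) \<le> (norm ((y k - xstar) - \<gamma> *\<^sub>R Gk k))\<^sup>2"
        unfolding a_def by (simp add: algebra_simps power_mono)
      also have "\<dots> = a k - 2*\<gamma>*(Gk k \<bullet> (y k - xstar)) + \<gamma>^2 * (norm (Gk k))\<^sup>2"
        unfolding a_def by (rule norm_sub_scale_sq)
      finally have "2*\<gamma>*(Gk k \<bullet> (y k - xstar)) \<le> a k - a (Suc k) + \<gamma>^2 * (norm (Gk k))\<^sup>2" by simp
      then show ?thesis using gp by (simp add: field_simps power2_eq_square)
    qed
    have Gsq: "(norm (Gk k))\<^sup>2 \<le> 2*L\<^sup>2 + 2*(norm (Dk k))\<^sup>2" for k
    proof -
      have "Gk k = Gb (y k) + Dk k" by (simp add: Gk_def Dk_def)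
      then have "norm (Gk k) \<le> norm (Gb (y k)) + norm (Dk k)" by (simp add: norm_triangle_ineq)
      also have "\<dots> \<le> L + norm (Dk k)" using A1'[OF yin] by simp
      finally have "(norm (Gk k))\<^sup>2 \<le> (L + norm (Dk k))\<^sup>2" by (simp add: power_mono)
      also have "\<dots> \<le> 2*L\<^sup>2 + 2*(norm (Dk k))\<^sup>2"
        using sum_squares_ge_zero[of "L - norm (Dk k)" 0] by (simp add: power2_eq_square algebra_simps)
      finally show ?thesis .
    qed
    have fk: "f (y k) - f xstar \<le> Gk k \<bullet> (y k - xstar) + Dk k \<bullet> (xstar - y k)" for k
    proof -
      have "f (y k) - f xstar \<le> Gb (y k) \<bullet> (y k - xstar)"
        using A2'[OF yin[of k]] by (simp add: inner_diff_right)
      also have "Gb (y k) = Gk k - Dk k" by (simp add: Gk_def Dk_def)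
      finally show ?thesis by (simp add: inner_diff_left inner_diff_right inner_commute)
    qed
    have "Sf \<le> (\<Sum>k<N. Gk k \<bullet> (y k - xstar)) + (\<Sum>k<N. Dk k \<bullet> (xstar - y k))"
      unfolding Sf_def sum.distrib[symmetric] by (intro sum_mono fk)
    also have "(\<Sum>k<N. Gk k \<bullet> (y k - xstar)) \<le> (\<Sum>k<N. (a k - a (Suc k)) / (2*\<gamma>) + \<gamma>/2 * (norm (Gk k))\<^sup>2)"
      by (intro sum_mono step)
    also have "\<dots> = (a 0 - a N) / (2*\<gamma>) + \<gamma>/2 * (\<Sum>k<N. (norm (Gk k))\<^sup>2)"
      by (simp add: sum.distrib sum_divide_distrib[symmetric] sum_distrib_left sum_lessThan_telescope')
    also have "\<dots> \<le> D\<^sup>2 / (2*\<gamma>) + \<gamma>/2 * (\<Sum>k<N. 2*L\<^sup>2 + 2*(norm (Dk k))\<^sup>2)"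
    proof (intro add_mono mult_left_mono sum_mono Gsq divide_right_mono)
      have "a 0 \<le> D\<^sup>2" unfolding a_def using Xb[OF xs] y0 D0
        by (simp add: norm_minus_commute power_mono)
      then show "a 0 - a N \<le> D\<^sup>2" unfolding a_def by (smt (verit) zero_le_power2)
    qed (use gp in auto)
    also have "\<dots> = D\<^sup>2 / (2*\<gamma>) + \<gamma> * N * L\<^sup>2 + \<gamma> * (\<Sum>k<N. (norm (Dk k))\<^sup>2)"
      by (simp add: sum.distrib sum_distrib_left[symmetric] algebra_simps)
    finally have Sfb: "Sf \<le> D\<^sup>2 / (2*\<gamma>) + \<gamma> * N * L\<^sup>2 + \<gamma> * (\<Sum>k<N. (norm (Dk k))\<^sup>2) + (\<Sum>k<N. Dk k \<bullet> (xstar - y k))"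
      by linarith
    have h4': "\<gamma> * (\<Sum>k<N. (norm (Dk k))\<^sup>2) \<le> \<gamma> * (\<Theta>*N*M2\<^sup>2)"
      using h4 gp by (simp add: Dk_def)
    have h3': "(\<Sum>k<N. Dk k \<bullet> (xstar - y k)) \<le> 2*D*M2*\<Theta>* sqrt N" using h3 by (simp add: Dk_def)
    have e1: "D\<^sup>2 / (2*\<gamma>) = sqrt N * (D*(M2\<^sup>2+L\<^sup>2)/c)"
    proof -
      have "D\<^sup>2 / (2*\<gamma>) = D * c * sqrt N / 2" using Dp cpos sN unfolding \<gamma> by (simp add: field_simps power2_eq_square)
      also have "\<dots> = sqrt N * (D * c^2 / (2*c))" using cpos by (simp add: field_simps power2_eq_square)
      also have "\<dots> = sqrt N * (D*(M2\<^sup>2+L\<^sup>2)/c)" using cpos by (simp add: c2 field_simps)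
      finally show ?thesis .
    qed
    have e2: "\<gamma> * N * L\<^sup>2 = sqrt N * (D*L\<^sup>2/c)"
    proof -
      have "\<gamma> * N * L\<^sup>2 = \<gamma> * (sqrt N)^2 * L\<^sup>2" using sN by simp
      then show ?thesis unfolding \<gamma> using cpos sN by (simp add: field_simps power2_eq_square)
    qed
    have e3: "\<gamma> * (\<Theta>*N*M2\<^sup>2) = sqrt N * (\<Theta>*(D*M2\<^sup>2/c))"
    proof -
      have "\<gamma> * (\<Theta>*N*M2\<^sup>2) = \<gamma> * (\<Theta>*(sqrt N)^2*M2\<^sup>2)" using sN by simp
      then show ?thesis unfolding \<gamma> using cpos sN by (simp add: field_simps power2_eq_square)
    qed
    have "Sd + Sf \<le> \<Theta>*M1* sqrt N + sqrt N * (D*(M2\<^sup>2+L\<^sup>2)/c) + sqrt N * (D*L\<^sup>2/c)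
                  + sqrt N * (\<Theta>*(D*M2\<^sup>2/c)) + 2*D*M2*\<Theta>* sqrt N"
      using Sfb h1 h3' h4' e1 e2 e3 unfolding Sd_def by linarith
    also have "\<dots> = N * T" unfolding NT using cpos by (simp add: field_simps)
    finally show ?thesis .
  qed
  have Sflow: "- (N * T) \<le> Sd + Sf" using h2 Tlow Sf0 unfolding Sd_def by linarith
  have "\<bar>Sd + Sf\<bar> \<le> N * T" using Sfup Sflow by linarith
  then have "\<bar>(Sd + Sf) / N\<bar> \<le> T" using Npos by (simp add: field_simps)
  then show ?thesis unfolding eq T_def .
qed

lemma (in prob_space) chernoff:
  assumes Z: "Z \<in> borel_measurable M" and B: "(\<integral>\<^sup>+\<omega>. ennreal (exp (Z \<omega>)) \<partial>M) \<le> ennreal C" and C: "0 \<le> C"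
  shows "measure M {\<omega> \<in> space M. Z \<omega> > b} \<le> C * exp (- b)"
proof -
  have "emeasure M {\<omega> \<in> space M. Z \<omega> > b} = (\<integral>\<^sup>+\<omega>. indicator {\<omega> \<in> space M. Z \<omega> > b} \<omega> \<partial>M)"
    using Z by (intro nn_integral_indicator[symmetric]) measurable
  also have "\<dots> \<le> (\<integral>\<^sup>+\<omega>. ennreal (exp (- b)) * ennreal (exp (Z \<omega>)) \<partial>M)"
  proof (intro nn_integral_mono)
    fix \<omega> assume "\<omega> \<in> space M"
    show "indicator {\<omega> \<in> space M. Z \<omega> > b} \<omega> \<le> ennreal (exp (- b)) * ennreal (exp (Z \<omega>))"
    proof (cases "Z \<omega> > b")
      case True
      then have "1 \<le> exp (- b) * exp (Z \<omega>)" by (simp flip: exp_add)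
      then show ?thesis using True \<open>\<omega> \<in> space M\<close> by (simp flip: ennreal_mult)
    qed (auto simp: indicator_def)
  qed
  also have "\<dots> = ennreal (exp (- b)) * (\<integral>\<^sup>+\<omega>. ennreal (exp (Z \<omega>)) \<partial>M)"
    using Z by (simp add: nn_integral_cmult)
  also have "\<dots> \<le> ennreal (exp (- b)) * ennreal C" using B by (intro mult_left_mono) auto
  also have "\<dots> = ennreal (C * exp (- b))" using C by (simp flip: ennreal_mult add: mult.commute)
  finally show ?thesis using C by (simp add: emeasure_eq_measure)
qed

context
  fixes M :: "'w measure" and S :: "'b measure" and P :: "'b measure"
    and \<xi> :: "nat \<Rightarrow> 'w \<Rightarrow> 'b" and X :: "(real^'n) set"
    and G :: "real^'n \<Rightarrow> 'b \<Rightarrow> real^'n" and x1 :: "real^'n" and gam :: real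
  assumes M: "prob_space M"
    and \<xi>_meas: "\<And>t. t \<ge> 1 \<Longrightarrow> \<xi> t \<in> measurable M S"
    and \<xi>_distr: "\<And>t. t \<ge> 1 \<Longrightarrow> distr M S (\<xi> t) = P"
    and \<xi>_indep: "prob_space.indep_vars M (\<lambda>_. S) \<xi> {1..}"
    and X: "X \<noteq> {}" "closed X" "convex X" and x1: "x1 \<in> X"
    and G_meas: "(\<lambda>(x, s). G x s) \<in> borel_measurable (borel \<Otimes>\<^sub>M S)"
begin

lemma seq_meas:
  fixes \<psi> :: "nat \<Rightarrow> real^'n \<Rightarrow> 'b \<Rightarrow> real"
  assumes \<psi>m: "\<And>t. (\<lambda>(x, s). \<psi> t x s) \<in> borel_measurable (borel \<Otimes>\<^sub>M S)"
  shows "(\<lambda>\<omega>. \<Sum>t=1..n. \<psi> t (rsa X G gam x1 \<xi> \<omega> (t-1)) (\<xi> t \<omega>)) \<in> borel_measurable M"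
proof -
  define H where "H \<omega> = restrict (\<lambda>i. \<xi> i \<omega>) {1..n}" for \<omega>
  have Hm: "H \<in> measurable M (PiM {1..n} (\<lambda>_. S))"
    unfolding H_def by (intro measurable_restrict \<xi>_meas) auto
  have xtm: "k \<le> n \<Longrightarrow> xt X G gam x1 k \<in> borel_measurable (PiM {1..n} (\<lambda>_. S))" for k
    by (rule xt_meas[OF G_meas X(1,2,3)])
  have \<psi>comp: "(\<lambda>h. \<psi> t (xt X G gam x1 k h) (h j)) \<in> borel_measurable (PiM {1..n} (\<lambda>_. S))"
    if "k \<le> n" "j \<in> {1..n}" for t k j
  proof -
    have c: "(\<lambda>h. h j) \<in> measurable (PiM {1..n} (\<lambda>_. S)) S"
      using that by (intro measurable_component_singleton) auto
    show ?thesis using measurable_compose[OF measurable_Pair[OF xtm[OF that(1)] c] \<psi>m[of t]] by simp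
  qed
  have "(\<lambda>h. \<Sum>t=1..n. \<psi> t (xt X G gam x1 (t-1) h) (h t)) \<in> borel_measurable (PiM {1..n} (\<lambda>_. S))"
    by (intro borel_measurable_sum \<psi>comp) auto
  from measurable_compose[OF Hm this]
  have "(\<lambda>\<omega>. \<Sum>t=1..n. \<psi> t (xt X G gam x1 (t-1) (H \<omega>)) (H \<omega> t)) \<in> borel_measurable M" .
  moreover have "(\<Sum>t=1..n. \<psi> t (xt X G gam x1 (t-1) (H \<omega>)) (H \<omega> t)) = (\<Sum>t=1..n. \<psi> t (rsa X G gam x1 \<xi> \<omega> (t-1)) (\<xi> t \<omega>))" for \<omega>
  proof (intro sum.cong refl)
    fix t assume t: "t \<in> {1..n}"
    have "rsa X G gam x1 \<xi> \<omega> (t-1) = xt X G gam x1 (t-1) (H \<omega>)"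
      using t unfolding H_def by (intro rsa_local) auto
    then show "\<psi> t (xt X G gam x1 (t-1) (H \<omega>)) (H \<omega> t) = \<psi> t (rsa X G gam x1 \<xi> \<omega> (t-1)) (\<xi> t \<omega>)"
      using t by (simp add: H_def)
  qed
  ultimately show ?thesis by simp
qed

lemma chernoff_seq:
  fixes \<psi> :: "nat \<Rightarrow> real^'n \<Rightarrow> 'b \<Rightarrow> real"
  assumes \<psi>m: "\<And>t. (\<lambda>(x, s). \<psi> t x s) \<in> borel_measurable (borel \<Otimes>\<^sub>M S)"
    and \<psi>b: "\<And>t x. x \<in> X \<Longrightarrow> (\<integral>\<^sup>+s. ennreal (exp (\<psi> t x s)) \<partial>P) \<le> ennreal C"
    and C: "0 \<le> C"
  shows "measure M {\<omega> \<in> space M. (\<Sum>t=1..n. \<psi> t (rsa X G gam x1 \<xi> \<omega> (t-1)) (\<xi> t \<omega>)) > b} \<le> C ^ n * exp (- b)"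
proof -
  interpret prob_space M by (rule M)
  have "(\<integral>\<^sup>+\<omega>. ennreal (exp (\<Sum>t=1..n. \<psi> t (rsa X G gam x1 \<xi> \<omega> (t-1)) (\<xi> t \<omega>))) \<partial>M) \<le> ennreal C ^ n"
    by (rule seq_mgf[OF M \<xi>_meas \<xi>_distr \<xi>_indep X x1 G_meas \<psi>m \<psi>b])
  also have "\<dots> = ennreal (C ^ n)" using C by (simp add: ennreal_power)
  finally show ?thesis using C by (intro chernoff seq_meas \<psi>m) auto
qed

end


lemma exp_chernoff_arith:
  fixes \<sigma> \<Theta> :: real and N :: nat
  assumes "\<sigma> > 0" "N \<ge> 1"
  shows "exp ((\<Theta>/(2*\<sigma>* sqrt N))\<^sup>2 * \<sigma>\<^sup>2) ^ N * exp (- ((\<Theta>/(2*\<sigma>* sqrt N)) * (\<Theta>*\<sigma>* sqrt N))) = exp (- \<Theta>\<^sup>2/4)"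
proof -
  have sN: "sqrt N > 0" "(sqrt N)^2 = N" using assms by auto
  have "exp ((\<Theta>/(2*\<sigma>* sqrt N))\<^sup>2 * \<sigma>\<^sup>2) ^ N = exp (N * ((\<Theta>/(2*\<sigma>* sqrt N))\<^sup>2 * \<sigma>\<^sup>2))"
    by (simp add: exp_of_nat_mult)
  also have "N * ((\<Theta>/(2*\<sigma>* sqrt N))\<^sup>2 * \<sigma>\<^sup>2) = \<Theta>\<^sup>2/4"
    using sN assms by (simp add: power_divide power_mult_distrib field_simps)
  finally have a: "exp ((\<Theta>/(2*\<sigma>* sqrt N))\<^sup>2 * \<sigma>\<^sup>2) ^ N = exp (\<Theta>\<^sup>2/4)" .
  have b: "(\<Theta>/(2*\<sigma>* sqrt N)) * (\<Theta>*\<sigma>* sqrt N) = \<Theta>\<^sup>2/2"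
    using sN assms by (simp add: field_simps power2_eq_square)
  show ?thesis unfolding a b by (simp flip: exp_add)
qed

theorem proposition1:
  fixes M :: "'w measure" and S :: "'b measure" and P :: "'b measure"
    and \<xi> :: "nat \<Rightarrow> 'w \<Rightarrow> 'b"
    and X :: "(real^'n) set"
    and g :: "real^'n \<Rightarrow> 'b \<Rightarrow> real" and G :: "real^'n \<Rightarrow> 'b \<Rightarrow> real^'n"
    and f :: "real^'n \<Rightarrow> real"
    and x1 xstar :: "real^'n"
    and L M1 M2 :: real and N :: nat
  assumes M: "prob_space M"
    and \<xi>_meas: "\<And>t. t \<ge> 1 \<Longrightarrow> \<xi> t \<in> measurable M S"
    and \<xi>_distr: "\<And>t. t \<ge> 1 \<Longrightarrow> distr M S (\<xi> t) = P"
    and \<xi>_indep: "prob_space.indep_vars M (\<lambda>_. S) \<xi> {1..}"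
    and X: "X \<noteq> {}" "closed X" "bounded X" "convex X"
    and g_meas: "(\<lambda>(x, s). g x s) \<in> borel_measurable (borel \<Otimes>\<^sub>M S)"
    and G_meas: "(\<lambda>(x, s). G x s) \<in> borel_measurable (borel \<Otimes>\<^sub>M S)"
    and g_convex: "\<And>s. s \<in> space S \<Longrightarrow> convex_on UNIV (\<lambda>x. g x s)"
    and G_subgrad: "\<And>x s. s \<in> space S \<Longrightarrow> is_subgradient (\<lambda>y. g y s) x (G x s)"
    and g_int: "\<And>x. x \<in> X \<Longrightarrow> integrable P (g x)"
    and G_int: "\<And>x. x \<in> X \<Longrightarrow> integrable P (G x)"
    and f_def: "\<And>x. x \<in> X \<Longrightarrow> f x = (\<integral>s. g x s \<partial>P)"
    and f_convex: "convex_on X f"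
    and f_lip: "\<exists>C. C-lipschitz_on X f"
    and xstar: "xstar \<in> X" "\<And>x. x \<in> X \<Longrightarrow> f xstar \<le> f x"
    and x1: "x1 \<in> X"
    and N: "N \<ge> 1"
    and M12: "M1 > 0" "M2 > 0"
    \<comment> \<open>Assumption 1\<close>
    and A1: "\<And>x. x \<in> X \<Longrightarrow> norm (\<integral>s. G x s \<partial>P) \<le> L"
    \<comment> \<open>Assumption 2 (second part; the first part is f_def)\<close>
    and A2: "\<And>x. x \<in> X \<Longrightarrow> (\<forall>y\<in>X. f y \<ge> f x + (\<integral>s. G x s \<partial>P) \<bullet> (y - x))"
    \<comment> \<open>Assumption 3\<close>
    and A3: "\<And>x. x \<in> X \<Longrightarrow> (\<integral>\<^sup>+ s. ennreal ((g x s - f x)\<^sup>2) \<partial>P) \<le> ennreal (M1\<^sup>2)"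
            "\<And>x. x \<in> X \<Longrightarrow> (\<integral>\<^sup>+ s. ennreal ((norm (G x s - (\<integral>s. G x s \<partial>P)))\<^sup>2) \<partial>P) \<le> ennreal (M2\<^sup>2)"
  shows "let DX = (SUP x\<in>X. norm (x - x1));
             \<gamma> = DX / (sqrt (2 * (M2\<^sup>2 + L\<^sup>2)) * sqrt (real N));
             xs = rsa X G \<gamma> x1 \<xi>;
             gN = (\<lambda>\<omega>. (1 / real N) * (\<Sum>\<tau>=1..N. g (xs \<omega> (\<tau> - 1)) (\<xi> \<tau> \<omega>)));
             K1 = DX * (M2\<^sup>2 + 2 * L\<^sup>2) / sqrt (2 * (M2\<^sup>2 + L\<^sup>2));
             K2 = DX * M2\<^sup>2 / sqrt (2 * (M2\<^sup>2 + L\<^sup>2)) + 2 * DX * M2 + M1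
         in ((\<forall>x\<in>X. (\<integral>\<^sup>+ s. ennreal (exp ((g x s - f x)\<^sup>2 / M1\<^sup>2)) \<partial>P) \<le> ennreal (exp 1)
                   \<and> (\<integral>\<^sup>+ s. ennreal (exp ((norm (G x s - (\<integral>s. G x s \<partial>P)))\<^sup>2 / M2\<^sup>2)) \<partial>P) \<le> ennreal (exp 1))
             \<longrightarrow> (\<forall>\<Theta>>0. measure M {\<omega> \<in> space M. \<bar>gN \<omega> - f xstar\<bar> > (K1 + \<Theta> * K2) / sqrt (real N)}
                          \<le> 4 * exp 1 * exp (- \<Theta>)))
          \<and> ((\<forall>x\<in>X. (\<integral>\<^sup>+ s. ennreal (exp ((g x s - f x)\<^sup>2 / M1\<^sup>2)) \<partial>P) \<le> ennreal (exp 1)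
                   \<and> (AE s in P. norm (G x s - (\<integral>s. G x s \<partial>P)) \<le> M2))
             \<longrightarrow> (\<forall>\<Theta>>0. measure M {\<omega> \<in> space M. \<bar>gN \<omega> - f xstar\<bar> > (K1 + \<Theta> * K2) / sqrt (real N)}
                          \<le> (3 + exp 1) * exp (- \<Theta>\<^sup>2 / 4)))"
proof -
  interpret prob_space M by (rule M)
  have Pps: "prob_space P" using \<xi>_distr[of 1] prob_space_distr[OF \<xi>_meas[of 1]] by simp
  interpret P: prob_space P by (rule Pps)
  have setsP: "sets P = sets S" using \<xi>_distr[of 1] by (metis order_refl sets_distr)
  define DX where "DX = (SUP x\<in>X. norm (x - x1))"
  define \<gamma> where "\<gamma> = DX / (sqrt (2 * (M2\<^sup>2 + L\<^sup>2)) * sqrt (real N))"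
  define xs where "xs = rsa X G \<gamma> x1 \<xi>"
  define gN where "gN = (\<lambda>\<omega>. (1 / real N) * (\<Sum>\<tau>=1..N. g (xs \<omega> (\<tau> - 1)) (\<xi> \<tau> \<omega>)))"
  define K1 where "K1 = DX * (M2\<^sup>2 + 2 * L\<^sup>2) / sqrt (2 * (M2\<^sup>2 + L\<^sup>2))"
  define K2 where "K2 = DX * M2\<^sup>2 / sqrt (2 * (M2\<^sup>2 + L\<^sup>2)) + 2 * DX * M2 + M1"
  define c where "c = sqrt (2 * (M2\<^sup>2 + L\<^sup>2))"
  define Gb where "Gb x = (\<integral>s. G x s \<partial>P)" for x
  define ft where "ft x = (\<integral>s. g x s \<partial>P)" for x
  define Sd where "Sd \<omega> = (\<Sum>t=1..N. g (xs \<omega> (t-1)) (\<xi> t \<omega>) - f (xs \<omega> (t-1)))" for \<omega>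
  define Sz where "Sz \<omega> = (\<Sum>t=1..N. (G (xs \<omega> (t-1)) (\<xi> t \<omega>) - Gb (xs \<omega> (t-1))) \<bullet> (xstar - xs \<omega> (t-1)))" for \<omega>
  define SD where "SD \<omega> = (\<Sum>t=1..N. (norm (G (xs \<omega> (t-1)) (\<xi> t \<omega>) - Gb (xs \<omega> (t-1))))\<^sup>2)" for \<omega>
  have bdd: "bdd_above ((\<lambda>x. norm (x - x1)) ` X)"
  proof -
    obtain B where B: "\<forall>x\<in>X. norm x \<le> B" using X(3) by (auto simp: bounded_iff)
    show ?thesis
    proof (rule bdd_aboveI2)
      fix x assume "x \<in> X"
      then show "norm (x - x1) \<le> B + norm x1" using B norm_triangle_ineq4[of x x1] by fastforce
    qed
  qed
  have Xb: "x \<in> X \<Longrightarrow> norm (x - x1) \<le> DX" for x unfolding DX_def by (rule cSUP_upper[OF _ bdd])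
  have D0: "0 \<le> DX" using Xb[OF x1] by simp
  have L0: "0 \<le> L" using A1[OF x1] norm_ge_zero[of "\<integral>s. G x1 s \<partial>P"] by linarith
  have cpos: "c > 0" unfolding c_def using M12 by (simp add: add_pos_nonneg)
  have sN: "sqrt N > 0" using N by simp
  have xsin[simp]: "xs \<omega> k \<in> X" for \<omega> k unfolding xs_def by (rule rsa_in[OF X(2,1) x1])
  have fft[simp]: "x \<in> X \<Longrightarrow> f x = ft x" for x using f_def ft_def by simp
  have gP: "(\<lambda>(x, s). g x s) \<in> borel_measurable (borel \<Otimes>\<^sub>M P)"
    using g_meas by (subst measurable_cong_sets[OF sets_pair_measure_cong[OF refl setsP] refl])
  have GP: "(\<lambda>(x, s). G x s) \<in> borel_measurable (borel \<Otimes>\<^sub>M P)"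
    using G_meas by (subst measurable_cong_sets[OF sets_pair_measure_cong[OF refl setsP] refl])
  have ftm[measurable]: "ft \<in> borel_measurable borel"
    unfolding ft_def[abs_def] using P.borel_measurable_lebesgue_integral[OF gP] by simp
  have Gbm[measurable]: "Gb \<in> borel_measurable borel"
    unfolding Gb_def[abs_def] using P.borel_measurable_lebesgue_integral[OF GP] by simp
  have gm[measurable]: "(\<lambda>z. g (fst z) (snd z)) \<in> borel_measurable (borel \<Otimes>\<^sub>M S)"
    using g_meas by (simp add: case_prod_beta')
  have Gm[measurable]: "(\<lambda>z. G (fst z) (snd z)) \<in> borel_measurable (borel \<Otimes>\<^sub>M S)"
    using G_meas by (simp add: case_prod_beta')
  note CS = chernoff_seq[OF M \<xi>_meas \<xi>_distr \<xi>_indep X(1,2,4) x1 G_meas, where n=N and gam=\<gamma>, folded xs_def]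
  note SM = seq_meas[OF M \<xi>_meas \<xi>_distr \<xi>_indep X(1,2,4) x1 G_meas, where n=N and gam=\<gamma>, folded xs_def]
  have key: "\<bar>gN \<omega> - f xstar\<bar> \<le> (K1 + \<Theta> * K2) / sqrt (real N)"
    if \<Theta>: "\<Theta> > 0" and h1: "Sd \<omega> \<le> \<Theta>*M1* sqrt N" and h2: "- Sd \<omega> \<le> \<Theta>*M1* sqrt N"
      and h3: "Sz \<omega> \<le> 2*DX*M2*\<Theta>* sqrt N" and h4: "SD \<omega> \<le> \<Theta>*N*M2\<^sup>2" for \<Theta> \<omega>
  proof -
    have conv: "(\<Sum>t=1..N. F t) = (\<Sum>k<N. F (Suc k))" for F :: "nat \<Rightarrow> real"
      by (rule sum_bounds_lt_plus1[symmetric])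
    have "\<bar>(1/N) * (\<Sum>k<N. g (xs \<omega> k) (\<xi> (Suc k) \<omega>)) - f xstar\<bar>
     \<le> (DX*(M2\<^sup>2+2*L\<^sup>2)/c + \<Theta>*(DX*M2\<^sup>2/c + 2*DX*M2 + M1)) / sqrt N"
    proof (rule det_bound[where y="xs \<omega>" and e="\<lambda>k. \<xi> (Suc k) \<omega>" and G=G and Gb=Gb and X=X
          and \<gamma>=\<gamma> and c=c and L=L])
      show "closed X" "convex X" "X \<noteq> {}" "x1 \<in> X" "xstar \<in> X" using X x1 xstar by auto
      show "\<And>x. x \<in> X \<Longrightarrow> norm (x - x1) \<le> DX" by (rule Xb)
      show "\<And>x. x \<in> X \<Longrightarrow> f xstar \<ge> f x + Gb x \<bullet> (xstar - x)" using A2 xstar(1) by (simp add: Gb_def)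
      show "\<And>x. x \<in> X \<Longrightarrow> norm (Gb x) \<le> L" using A1 by (simp add: Gb_def)
      show "\<And>x. x \<in> X \<Longrightarrow> f xstar \<le> f x" by (rule xstar(2))
      show "xs \<omega> 0 = x1" by (simp add: xs_def)
      show "\<And>k. xs \<omega> (Suc k) = closest_point X (xs \<omega> k - \<gamma> *\<^sub>R G (xs \<omega> k) (\<xi> (Suc k) \<omega>))"
        by (simp add: xs_def)
      show "\<gamma> = DX / (c * sqrt N)" by (simp add: \<gamma>_def c_def)
      show "c = sqrt (2*(M2\<^sup>2+L\<^sup>2))" by (simp add: c_def)
      show "M1 > 0" "M2 > 0" "N \<ge> 1" "\<Theta> > 0" using M12 N \<Theta> by auto
      show "(\<Sum>k<N. g (xs \<omega> k) (\<xi> (Suc k) \<omega>) - f (xs \<omega> k)) \<le> \<Theta>*M1* sqrt N"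
        using h1 unfolding Sd_def conv by simp
      show "-(\<Sum>k<N. g (xs \<omega> k) (\<xi> (Suc k) \<omega>) - f (xs \<omega> k)) \<le> \<Theta>*M1* sqrt N"
        using h2 unfolding Sd_def conv by simp
      show "(\<Sum>k<N. (G (xs \<omega> k) (\<xi> (Suc k) \<omega>) - Gb (xs \<omega> k)) \<bullet> (xstar - xs \<omega> k)) \<le> 2*DX*M2*\<Theta>* sqrt N"
        using h3 unfolding Sz_def conv by simp
      show "(\<Sum>k<N. (norm (G (xs \<omega> k) (\<xi> (Suc k) \<omega>) - Gb (xs \<omega> k)))\<^sup>2) \<le> \<Theta>*N*M2\<^sup>2"
        using h4 unfolding SD_def conv by simp
    qed
    moreover have "gN \<omega> = (1/N) * (\<Sum>k<N. g (xs \<omega> k) (\<xi> (Suc k) \<omega>))"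
      unfolding gN_def conv by simp
    moreover have "(K1 + \<Theta> * K2) = (DX*(M2\<^sup>2+2*L\<^sup>2)/c + \<Theta>*(DX*M2\<^sup>2/c + 2*DX*M2 + M1))"
      unfolding K1_def K2_def c_def by simp
    ultimately show ?thesis by simp
  qed
  have Npos: "real N > 0" using N by simp
  define l1 where "l1 \<Theta> = \<Theta>/(2*M1* sqrt N)" for \<Theta>
  define \<psi>1 where "\<psi>1 \<Theta> (t::nat) x s = l1 \<Theta> * (g x s - ft x)" for \<Theta> t x s
  define \<psi>2 where "\<psi>2 \<Theta> (t::nat) x s = (- l1 \<Theta>) * (g x s - ft x)" for \<Theta> t x s
  define \<sigma>3 where "\<sigma>3 = 2*DX*M2"
  define l3 where "l3 \<Theta> = \<Theta>/(2*\<sigma>3* sqrt N)" for \<Theta>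
  define \<psi>3 where "\<psi>3 \<Theta> (t::nat) x s = l3 \<Theta> * ((G x s - Gb x) \<bullet> (xstar - x))" for \<Theta> t x s
  define \<psi>4 where "\<psi>4 (t::nat) x s = (1/N) * ((norm (G x s - Gb x))\<^sup>2/M2\<^sup>2)" for t x s
  define \<psi>5 where "\<psi>5 \<Theta> (t::nat) x s = (\<Theta>\<^sup>2/(4*M2\<^sup>2)) * (norm (G x s - Gb x))\<^sup>2" for \<Theta> t x s
  define Zs where "Zs \<psi> \<omega> = (\<Sum>t=1..N. \<psi> t (xs \<omega> (t-1)) (\<xi> t \<omega>))" for \<psi> :: "nat \<Rightarrow> real^'n \<Rightarrow> 'b \<Rightarrow> real" and \<omega>
  define E where "E \<psi> b = {\<omega>\<in>space M. Zs \<psi> \<omega> > b}" for \<psi> b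
  have m1: "(\<lambda>(x,s). \<psi>1 \<Theta> t x s) \<in> borel_measurable (borel \<Otimes>\<^sub>M S)" for \<Theta> t
    unfolding \<psi>1_def by measurable
  have m2: "(\<lambda>(x,s). \<psi>2 \<Theta> t x s) \<in> borel_measurable (borel \<Otimes>\<^sub>M S)" for \<Theta> t
    unfolding \<psi>2_def by measurable
  have m3: "(\<lambda>(x,s). \<psi>3 \<Theta> t x s) \<in> borel_measurable (borel \<Otimes>\<^sub>M S)" for \<Theta> t
    unfolding \<psi>3_def by measurable
  have m4: "(\<lambda>(x,s). \<psi>4 t x s) \<in> borel_measurable (borel \<Otimes>\<^sub>M S)" for t
    unfolding \<psi>4_def by measurable
  have m5: "(\<lambda>(x,s). \<psi>5 \<Theta> t x s) \<in> borel_measurable (borel \<Otimes>\<^sub>M S)" for \<Theta> t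
    unfolding \<psi>5_def by measurable
  have Zm: "E \<psi> b \<in> sets M"
    if "\<And>t. (\<lambda>(x,s). \<psi> t x s) \<in> borel_measurable (borel \<Otimes>\<^sub>M S)" for \<psi> b
  proof -
    have "Zs \<psi> \<in> borel_measurable M" unfolding Zs_def[abs_def] by (rule SM) (use that in auto)
    then show ?thesis unfolding E_def by measurable
  qed
  have z1: "Zs (\<psi>1 \<Theta>) \<omega> = l1 \<Theta> * Sd \<omega>" for \<Theta> \<omega>
    unfolding Zs_def \<psi>1_def Sd_def by (simp add: sum_distrib_left)
  have z2: "Zs (\<psi>2 \<Theta>) \<omega> = l1 \<Theta> * (- Sd \<omega>)" for \<Theta> \<omega>
    unfolding Zs_def \<psi>2_def Sd_def by (simp add: sum_distrib_left sum_negf)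
  have z3: "Zs (\<psi>3 \<Theta>) \<omega> = l3 \<Theta> * Sz \<omega>" for \<Theta> \<omega>
    unfolding Zs_def \<psi>3_def Sz_def by (simp add: sum_distrib_left)
  have z4: "Zs \<psi>4 \<omega> = (1/N) * (SD \<omega> / M2\<^sup>2)" for \<omega>
    unfolding Zs_def \<psi>4_def SD_def by (simp add: sum_distrib_left sum_divide_distrib)
  have z5: "Zs (\<psi>5 \<Theta>) \<omega> = (\<Theta>\<^sup>2/(4*M2\<^sup>2)) * SD \<omega>" for \<Theta> \<omega>
    unfolding Zs_def \<psi>5_def SD_def by (simp add: sum_distrib_left)
  have canc: "x \<le> y" if "a > 0" "\<not> (a * x > a * y)" for a x y :: real
    using that by (simp add: not_less mult_le_cancel_left_pos)
  have l1pos: "l1 \<Theta> > 0" if "\<Theta> > 0" for \<Theta> unfolding l1_def using that M12 sN by simp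
  have c1: "Sd \<omega> \<le> \<Theta>*M1* sqrt N" if "\<Theta> > 0" "\<omega> \<in> space M" "\<omega> \<notin> E (\<psi>1 \<Theta>) (l1 \<Theta> * (\<Theta>*M1* sqrt N))" for \<Theta> \<omega>
    using that by (intro canc[OF l1pos[OF that(1)]]) (simp add: E_def z1)
  have c2: "- Sd \<omega> \<le> \<Theta>*M1* sqrt N" if "\<Theta> > 0" "\<omega> \<in> space M" "\<omega> \<notin> E (\<psi>2 \<Theta>) (l1 \<Theta> * (\<Theta>*M1* sqrt N))" for \<Theta> \<omega>
    using that by (intro canc[OF l1pos[OF that(1)]]) (simp add: E_def z2)
  define E3 where "E3 \<Theta> = (if DX > 0 then E (\<psi>3 \<Theta>) (l3 \<Theta> * (\<Theta>*\<sigma>3* sqrt N)) else {})" for \<Theta>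
  have c3: "Sz \<omega> \<le> 2*DX*M2*\<Theta>* sqrt N" if "\<Theta> > 0" "\<omega> \<in> space M" "\<omega> \<notin> E3 \<Theta>" for \<Theta> \<omega>
  proof (cases "DX > 0")
    case True
    have l3pos: "l3 \<Theta> > 0" unfolding l3_def \<sigma>3_def using that M12 sN True by simp
    have "Sz \<omega> \<le> \<Theta>*\<sigma>3* sqrt N"
      using that True by (intro canc[OF l3pos]) (simp add: E3_def E_def z3)
    then show ?thesis by (simp add: \<sigma>3_def algebra_simps)
  next
    case False
    then have D: "DX = 0" using D0 by simp
    have "xs \<omega> k = xstar" for k using Xb[OF xsin[of \<omega> k]] Xb[OF xstar(1)] D by simp
    then show ?thesis by (simp add: Sz_def D)
  qed
  have c4: "SD \<omega> \<le> \<Theta>*N*M2\<^sup>2" if "\<omega> \<in> space M" "\<omega> \<notin> E \<psi>4 \<Theta>" for \<Theta> \<omega>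
  proof -
    have "(1/N) * (SD \<omega> / M2\<^sup>2) \<le> \<Theta>" using that by (simp add: E_def z4)
    then show ?thesis using Npos M12 by (simp add: field_simps)
  qed
  have c5: "SD \<omega> \<le> \<Theta>*N*M2\<^sup>2" if "\<Theta> > 0" "\<omega> \<in> space M" "\<omega> \<notin> E (\<psi>5 \<Theta>) ((\<Theta>\<^sup>2/(4*M2\<^sup>2)) * (\<Theta>*N*M2\<^sup>2))" for \<Theta> \<omega>
    using that M12 by (intro canc[of "\<Theta>\<^sup>2/(4*M2\<^sup>2)"]) (simp_all add: E_def z5)
  have sub: "{\<omega> \<in> space M. \<bar>gN \<omega> - f xstar\<bar> > (K1 + \<Theta> * K2) / sqrt (real N)}
      \<subseteq> E (\<psi>1 \<Theta>) (l1 \<Theta> * (\<Theta>*M1* sqrt N)) \<union> E (\<psi>2 \<Theta>) (l1 \<Theta> * (\<Theta>*M1* sqrt N)) \<union> E3 \<Theta> \<union> E4"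
    if "\<Theta> > 0" and E4: "\<And>\<omega>. \<omega> \<in> space M \<Longrightarrow> \<omega> \<notin> E4 \<Longrightarrow> SD \<omega> \<le> \<Theta>*N*M2\<^sup>2" for \<Theta> :: real and E4
  proof
    fix \<omega> assume w: "\<omega> \<in> {\<omega> \<in> space M. \<bar>gN \<omega> - f xstar\<bar> > (K1 + \<Theta> * K2) / sqrt (real N)}"
    show "\<omega> \<in> E (\<psi>1 \<Theta>) (l1 \<Theta> * (\<Theta>*M1* sqrt N)) \<union> E (\<psi>2 \<Theta>) (l1 \<Theta> * (\<Theta>*M1* sqrt N)) \<union> E3 \<Theta> \<union> E4"
    proof (rule ccontr)
      assume nin: "\<omega> \<notin> E (\<psi>1 \<Theta>) (l1 \<Theta> * (\<Theta>*M1* sqrt N)) \<union> E (\<psi>2 \<Theta>) (l1 \<Theta> * (\<Theta>*M1* sqrt N)) \<union> E3 \<Theta> \<union> E4"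
      have "\<bar>gN \<omega> - f xstar\<bar> \<le> (K1 + \<Theta> * K2) / sqrt (real N)"
        using w nin that by (intro key c1 c2 c3 E4) auto
      then show False using w by simp
    qed
  qed
  have sg: "(\<integral>\<^sup>+s. ennreal (exp (l * (g x s - ft x))) \<partial>P) \<le> ennreal (exp (l\<^sup>2*M1\<^sup>2))"
    if x: "x \<in> X" and Hd: "(\<integral>\<^sup>+ s. ennreal (exp ((g x s - f x)\<^sup>2/M1\<^sup>2)) \<partial>P) \<le> ennreal (exp 1)" for x l
  proof -
    have int: "integrable P (\<lambda>s. g x s - ft x)" using g_int[OF x] by simp
    show ?thesis
    proof (rule P.subgauss)
      show "(\<lambda>s. g x s - ft x) \<in> borel_measurable P" using int by (rule borel_measurable_integrable)
      show "integrable P (\<lambda>s. g x s - ft x)" by (rule int)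
      show "(\<integral>s. g x s - ft x \<partial>P) = 0" using g_int[OF x] by (simp add: ft_def P.prob_space)
      show "M1 > 0" using M12 by simp
      show "(\<integral>\<^sup>+ s. ennreal (exp ((g x s - ft x)\<^sup>2/M1\<^sup>2)) \<partial>P) \<le> ennreal (exp 1)" using Hd x by simp
    qed
  qed
  have sgD: "(\<integral>\<^sup>+s. ennreal (exp (l * ((G x s - Gb x) \<bullet> (xstar - x)))) \<partial>P) \<le> ennreal (exp (l\<^sup>2*\<sigma>3\<^sup>2))"
    if x: "x \<in> X" and DXp: "DX > 0"
      and HD: "(\<integral>\<^sup>+ s. ennreal (exp ((norm (G x s - Gb x))\<^sup>2/M2\<^sup>2)) \<partial>P) \<le> ennreal (exp 1)" for x l
  proof -
    have intG: "integrable P (\<lambda>s. G x s - Gb x)" using G_int[OF x] by simp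
    have int: "integrable P (\<lambda>s. (G x s - Gb x) \<bullet> (xstar - x))" using intG by simp
    have s3: "\<sigma>3 > 0" unfolding \<sigma>3_def using DXp M12 by simp
    have nv: "norm (xstar - x) \<le> 2*DX"
    proof -
      have "norm (xstar - x) = norm ((xstar - x1) - (x - x1))" by simp
      also have "\<dots> \<le> norm (xstar - x1) + norm (x - x1)" by (rule norm_triangle_ineq4)
      also have "\<dots> \<le> 2*DX" using Xb[OF xstar(1)] Xb[OF x] by simp
      finally show ?thesis .
    qed
    have pw: "((G x s - Gb x) \<bullet> (xstar - x))\<^sup>2/\<sigma>3\<^sup>2 \<le> (norm (G x s - Gb x))\<^sup>2/M2\<^sup>2" for s
    proof -
      have "\<bar>(G x s - Gb x) \<bullet> (xstar - x)\<bar> \<le> norm (G x s - Gb x) * norm (xstar - x)"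
        by (rule Cauchy_Schwarz_ineq2)
      also have "\<dots> \<le> norm (G x s - Gb x) * (2*DX)" using nv by (simp add: mult_left_mono)
      finally have "(\<bar>(G x s - Gb x) \<bullet> (xstar - x)\<bar>)\<^sup>2 \<le> (norm (G x s - Gb x) * (2*DX))\<^sup>2"
        by (intro power_mono) auto
      then have "((G x s - Gb x) \<bullet> (xstar - x))\<^sup>2 \<le> (norm (G x s - Gb x) * (2*DX))\<^sup>2" by simp
      then have "((G x s - Gb x) \<bullet> (xstar - x))\<^sup>2/\<sigma>3\<^sup>2 \<le> (norm (G x s - Gb x) * (2*DX))\<^sup>2/\<sigma>3\<^sup>2"
        by (intro divide_right_mono) auto
      also have "\<dots> = (norm (G x s - Gb x))\<^sup>2/M2\<^sup>2"
        unfolding \<sigma>3_def using DXp M12 by (simp add: power_mult_distrib field_simps)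
      finally show ?thesis .
    qed
    show ?thesis
    proof (rule P.subgauss)
      show "(\<lambda>s. (G x s - Gb x) \<bullet> (xstar - x)) \<in> borel_measurable P" using int by (rule borel_measurable_integrable)
      show "integrable P (\<lambda>s. (G x s - Gb x) \<bullet> (xstar - x))" by (rule int)
      show "(\<integral>s. (G x s - Gb x) \<bullet> (xstar - x) \<partial>P) = 0"
        using intG G_int[OF x] by (simp add: Gb_def P.prob_space)
      show "\<sigma>3 > 0" by (rule s3)
      have "(\<integral>\<^sup>+ s. ennreal (exp (((G x s - Gb x) \<bullet> (xstar - x))\<^sup>2/\<sigma>3\<^sup>2)) \<partial>P)
          \<le> (\<integral>\<^sup>+ s. ennreal (exp ((norm (G x s - Gb x))\<^sup>2/M2\<^sup>2)) \<partial>P)"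
        using pw by (intro nn_integral_mono ennreal_leI) simp
      then show "(\<integral>\<^sup>+ s. ennreal (exp (((G x s - Gb x) \<bullet> (xstar - x))\<^sup>2/\<sigma>3\<^sup>2)) \<partial>P) \<le> ennreal (exp 1)"
        using HD by (rule order.trans)
    qed
  qed
  have CS1: "measure M (E \<psi> b) \<le> C ^ N * exp (- b)"
    if "\<And>t. (\<lambda>(x,s). \<psi> t x s) \<in> borel_measurable (borel \<Otimes>\<^sub>M S)"
      "\<And>t x. x \<in> X \<Longrightarrow> (\<integral>\<^sup>+s. ennreal (exp (\<psi> t x s)) \<partial>P) \<le> ennreal C" "0 \<le> C" for \<psi> C b
    unfolding E_def Zs_def by (rule CS) (use that in auto)
  have b1: "measure M (E (\<psi>1 \<Theta>) (l1 \<Theta> * (\<Theta>*M1* sqrt N))) \<le> exp (- \<Theta>\<^sup>2/4)"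
    if "\<Theta> > 0" and Hd: "\<And>x. x \<in> X \<Longrightarrow> (\<integral>\<^sup>+ s. ennreal (exp ((g x s - f x)\<^sup>2/M1\<^sup>2)) \<partial>P) \<le> ennreal (exp 1)" for \<Theta>
  proof -
    have "measure M (E (\<psi>1 \<Theta>) (l1 \<Theta> * (\<Theta>*M1* sqrt N))) \<le> exp ((l1 \<Theta>)\<^sup>2*M1\<^sup>2) ^ N * exp (- (l1 \<Theta> * (\<Theta>*M1* sqrt N)))"
      by (rule CS1) (auto simp: m1 \<psi>1_def intro!: sg Hd)
    also have "\<dots> = exp (- \<Theta>\<^sup>2/4)" unfolding l1_def using M12 N by (intro exp_chernoff_arith) auto
    finally show ?thesis .
  qed
  have b2: "measure M (E (\<psi>2 \<Theta>) (l1 \<Theta> * (\<Theta>*M1* sqrt N))) \<le> exp (- \<Theta>\<^sup>2/4)"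
    if "\<Theta> > 0" and Hd: "\<And>x. x \<in> X \<Longrightarrow> (\<integral>\<^sup>+ s. ennreal (exp ((g x s - f x)\<^sup>2/M1\<^sup>2)) \<partial>P) \<le> ennreal (exp 1)" for \<Theta>
  proof -
    have "measure M (E (\<psi>2 \<Theta>) (l1 \<Theta> * (\<Theta>*M1* sqrt N))) \<le> exp ((l1 \<Theta>)\<^sup>2*M1\<^sup>2) ^ N * exp (- (l1 \<Theta> * (\<Theta>*M1* sqrt N)))"
    proof (rule CS1)
      fix t x assume x: "x \<in> X"
      show "(\<integral>\<^sup>+s. ennreal (exp (\<psi>2 \<Theta> t x s)) \<partial>P) \<le> ennreal (exp ((l1 \<Theta>)\<^sup>2*M1\<^sup>2))"
        using sg[OF x Hd[OF x], of "- l1 \<Theta>"] by (simp add: \<psi>2_def)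
    qed (auto simp: m2)
    also have "\<dots> = exp (- \<Theta>\<^sup>2/4)" unfolding l1_def using M12 N by (intro exp_chernoff_arith) auto
    finally show ?thesis .
  qed
  have b3: "measure M (E3 \<Theta>) \<le> exp (- \<Theta>\<^sup>2/4)"
    if "\<Theta> > 0" and HD: "\<And>x. x \<in> X \<Longrightarrow> (\<integral>\<^sup>+ s. ennreal (exp ((norm (G x s - Gb x))\<^sup>2/M2\<^sup>2)) \<partial>P) \<le> ennreal (exp 1)" for \<Theta>
  proof (cases "DX > 0")
    case True
    have s3: "\<sigma>3 > 0" unfolding \<sigma>3_def using True M12 by simp
    have "measure M (E (\<psi>3 \<Theta>) (l3 \<Theta> * (\<Theta>*\<sigma>3* sqrt N))) \<le> exp ((l3 \<Theta>)\<^sup>2*\<sigma>3\<^sup>2) ^ N * exp (- (l3 \<Theta> * (\<Theta>*\<sigma>3* sqrt N)))"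
      by (rule CS1) (auto simp: m3 \<psi>3_def intro!: sgD HD True)
    also have "\<dots> = exp (- \<Theta>\<^sup>2/4)" unfolding l3_def using s3 N by (intro exp_chernoff_arith) auto
    finally show ?thesis using True by (simp add: E3_def)
  qed (simp add: E3_def)
  have E3m: "E3 \<Theta> \<in> sets M" for \<Theta> unfolding E3_def using Zm[OF m3] by simp
  have Gms: "(\<lambda>s. G x s) \<in> borel_measurable P" if "x \<in> X" for x
    using G_int[OF that] by (rule borel_measurable_integrable)
  have b4: "measure M (E \<psi>4 \<Theta>) \<le> exp 1 * exp (- \<Theta>)"
    if HD: "\<And>x. x \<in> X \<Longrightarrow> (\<integral>\<^sup>+ s. ennreal (exp ((norm (G x s - Gb x))\<^sup>2/M2\<^sup>2)) \<partial>P) \<le> ennreal (exp 1)" for \<Theta>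
  proof -
    have "measure M (E \<psi>4 \<Theta>) \<le> exp (1/N) ^ N * exp (- \<Theta>)"
    proof (rule CS1)
      fix t x assume x: "x \<in> X"
      have [measurable]: "(\<lambda>s. G x s) \<in> borel_measurable P" by (rule Gms[OF x])
      show "(\<integral>\<^sup>+s. ennreal (exp (\<psi>4 t x s)) \<partial>P) \<le> ennreal (exp (1/N))"
        unfolding \<psi>4_def by (rule P.nn_exp_pow[OF _ HD[OF x]]) (use N in auto)
    qed (auto simp: m4)
    also have "exp (1/N) ^ N = exp 1" using Npos by (simp flip: exp_of_nat_mult)
    finally show ?thesis .
  qed
  have E4m: "E \<psi>4 \<Theta> \<in> sets M" for \<Theta> using Zm[OF m4] by simp
  have E5m: "E (\<psi>5 \<Theta>) b \<in> sets M" for \<Theta> b using Zm[OF m5] by simp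
  have E1m: "E (\<psi>1 \<Theta>) b \<in> sets M" for \<Theta> b using Zm[OF m1] by simp
  have E2m: "E (\<psi>2 \<Theta>) b \<in> sets M" for \<Theta> b using Zm[OF m2] by simp
  have b5: "measure M (E (\<psi>5 \<Theta>) ((\<Theta>\<^sup>2/(4*M2\<^sup>2)) * (\<Theta>*N*M2\<^sup>2))) \<le> exp (- \<Theta>\<^sup>2/4)"
    if Th: "\<Theta> \<ge> 2" and HA: "\<And>x. x \<in> X \<Longrightarrow> (AE s in P. norm (G x s - Gb x) \<le> M2)" for \<Theta>
  proof -
    have "measure M (E (\<psi>5 \<Theta>) ((\<Theta>\<^sup>2/(4*M2\<^sup>2)) * (\<Theta>*N*M2\<^sup>2))) \<le> exp (\<Theta>\<^sup>2/4) ^ N * exp (- ((\<Theta>\<^sup>2/(4*M2\<^sup>2)) * (\<Theta>*N*M2\<^sup>2)))"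
    proof (rule CS1)
      fix t x assume x: "x \<in> X"
      have "(\<integral>\<^sup>+s. ennreal (exp (\<psi>5 \<Theta> t x s)) \<partial>P) \<le> (\<integral>\<^sup>+s. ennreal (exp (\<Theta>\<^sup>2/4)) \<partial>P)"
      proof (rule nn_integral_mono_AE)
        show "AE s in P. ennreal (exp (\<psi>5 \<Theta> t x s)) \<le> ennreal (exp (\<Theta>\<^sup>2/4))"
          using HA[OF x]
        proof eventually_elim
          case (elim s)
          then have "(norm (G x s - Gb x))\<^sup>2 \<le> M2\<^sup>2" by (intro power_mono) auto
          then have "(\<Theta>\<^sup>2/(4*M2\<^sup>2)) * (norm (G x s - Gb x))\<^sup>2 \<le> (\<Theta>\<^sup>2/(4*M2\<^sup>2)) * M2\<^sup>2"
            by (intro mult_left_mono) auto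
          also have "\<dots> = \<Theta>\<^sup>2/4" using M12 by simp
          finally show ?case by (simp add: \<psi>5_def)
        qed
      qed
      also have "\<dots> = ennreal (exp (\<Theta>\<^sup>2/4))" by (simp add: P.emeasure_space_1)
      finally show "(\<integral>\<^sup>+s. ennreal (exp (\<psi>5 \<Theta> t x s)) \<partial>P) \<le> ennreal (exp (\<Theta>\<^sup>2/4))" .
    qed (auto simp: m5)
    also have "\<dots> = exp (N*(\<Theta>\<^sup>2/4) - N*\<Theta>\<^sup>2*\<Theta>/4)"
      using M12 by (simp flip: exp_of_nat_mult exp_add add: power2_eq_square field_simps)
    also have "\<dots> \<le> exp (- \<Theta>\<^sup>2/4)"
    proof -
      have "N*(\<Theta>\<^sup>2/4) - N*\<Theta>\<^sup>2*\<Theta>/4 = - (N*(\<Theta>-1)) * (\<Theta>\<^sup>2/4)" by (simp add: algebra_simps)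
      also have "\<dots> \<le> - 1 * (\<Theta>\<^sup>2/4)"
      proof -
        have N1: "1 \<le> real N" using N by simp
        have "1 * 1 \<le> real N * (\<Theta>-1)" using N1 Th by (intro mult_mono) auto
        then have "1 \<le> N*(\<Theta>-1)" by simp
        then show ?thesis by (intro mult_right_mono) auto
      qed
      finally show ?thesis by simp
    qed
    finally show ?thesis .
  qed
  have exp_le: "exp (- \<Theta>\<^sup>2/4) \<le> exp 1 * exp (- \<Theta>)" for \<Theta> :: real
  proof -
    have "- \<Theta>\<^sup>2/4 \<le> 1 + - \<Theta>" using zero_le_power2[of "\<Theta>/2 - 1"] by (simp add: power2_eq_square field_simps)
    then show ?thesis by (simp flip: exp_add)
  qed
  have part1: "(\<forall>x\<in>X. (\<integral>\<^sup>+ s. ennreal (exp ((g x s - f x)\<^sup>2 / M1\<^sup>2)) \<partial>P) \<le> ennreal (exp 1)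
                   \<and> (\<integral>\<^sup>+ s. ennreal (exp ((norm (G x s - (\<integral>s. G x s \<partial>P)))\<^sup>2 / M2\<^sup>2)) \<partial>P) \<le> ennreal (exp 1))
             \<longrightarrow> (\<forall>\<Theta>>0. measure M {\<omega> \<in> space M. \<bar>gN \<omega> - f xstar\<bar> > (K1 + \<Theta> * K2) / sqrt (real N)}
                          \<le> 4 * exp 1 * exp (- \<Theta>))"
  proof (intro impI allI)
    fix \<Theta> :: real
    assume H: "\<forall>x\<in>X. (\<integral>\<^sup>+ s. ennreal (exp ((g x s - f x)\<^sup>2 / M1\<^sup>2)) \<partial>P) \<le> ennreal (exp 1)
                   \<and> (\<integral>\<^sup>+ s. ennreal (exp ((norm (G x s - (\<integral>s. G x s \<partial>P)))\<^sup>2 / M2\<^sup>2)) \<partial>P) \<le> ennreal (exp 1)"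
      and \<Theta>: "\<Theta> > 0"
    have Hd: "\<And>x. x \<in> X \<Longrightarrow> (\<integral>\<^sup>+ s. ennreal (exp ((g x s - f x)\<^sup>2/M1\<^sup>2)) \<partial>P) \<le> ennreal (exp 1)"
      using H by auto
    have HD: "\<And>x. x \<in> X \<Longrightarrow> (\<integral>\<^sup>+ s. ennreal (exp ((norm (G x s - Gb x))\<^sup>2/M2\<^sup>2)) \<partial>P) \<le> ennreal (exp 1)"
      using H by (auto simp: Gb_def)
    let ?E1 = "E (\<psi>1 \<Theta>) (l1 \<Theta> * (\<Theta>*M1* sqrt N))" and ?E2 = "E (\<psi>2 \<Theta>) (l1 \<Theta> * (\<Theta>*M1* sqrt N))"
    have "measure M {\<omega> \<in> space M. \<bar>gN \<omega> - f xstar\<bar> > (K1 + \<Theta> * K2) / sqrt (real N)}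
        \<le> measure M (?E1 \<union> ?E2 \<union> E3 \<Theta> \<union> E \<psi>4 \<Theta>)"
      by (intro finite_measure_mono sub[OF \<Theta>] c4 sets.Un E1m E2m E3m E4m) auto
    also have "\<dots> \<le> measure M ?E1 + measure M ?E2 + measure M (E3 \<Theta>) + measure M (E \<psi>4 \<Theta>)"
      by (intro order.trans[OF measure_Un_le] add_mono order.refl sets.Un E1m E2m E3m E4m)
    also have "\<dots> \<le> exp (- \<Theta>\<^sup>2/4) + exp (- \<Theta>\<^sup>2/4) + exp (- \<Theta>\<^sup>2/4) + exp 1 * exp (- \<Theta>)"
      by (intro add_mono b1 b2 b3 b4 \<Theta> Hd HD)
    also have "\<dots> \<le> 4 * exp 1 * exp (- \<Theta>)" using exp_le[of \<Theta>] by simp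
    finally show "measure M {\<omega> \<in> space M. \<bar>gN \<omega> - f xstar\<bar> > (K1 + \<Theta> * K2) / sqrt (real N)} \<le> 4 * exp 1 * exp (- \<Theta>)" .
  qed
  have part2: "(\<forall>x\<in>X. (\<integral>\<^sup>+ s. ennreal (exp ((g x s - f x)\<^sup>2 / M1\<^sup>2)) \<partial>P) \<le> ennreal (exp 1)
                   \<and> (AE s in P. norm (G x s - (\<integral>s. G x s \<partial>P)) \<le> M2))
             \<longrightarrow> (\<forall>\<Theta>>0. measure M {\<omega> \<in> space M. \<bar>gN \<omega> - f xstar\<bar> > (K1 + \<Theta> * K2) / sqrt (real N)}
                          \<le> (3 + exp 1) * exp (- \<Theta>\<^sup>2 / 4))"
  proof (intro impI allI)
    fix \<Theta> :: real
    assume H: "\<forall>x\<in>X. (\<integral>\<^sup>+ s. ennreal (exp ((g x s - f x)\<^sup>2 / M1\<^sup>2)) \<partial>P) \<le> ennreal (exp 1)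
                   \<and> (AE s in P. norm (G x s - (\<integral>s. G x s \<partial>P)) \<le> M2)"
      and \<Theta>: "\<Theta> > 0"
    show "measure M {\<omega> \<in> space M. \<bar>gN \<omega> - f xstar\<bar> > (K1 + \<Theta> * K2) / sqrt (real N)} \<le> (3 + exp 1) * exp (- \<Theta>\<^sup>2 / 4)"
    proof (cases "\<Theta> \<ge> 2")
      case False
      have "exp (-1) \<le> exp (- \<Theta>\<^sup>2 / 4)"
      proof -
        have "\<Theta>\<^sup>2 \<le> 2\<^sup>2" using False \<Theta> by (intro power_mono) auto
        then show ?thesis by simp
      qed
      moreover have "1 \<le> (3 + exp (1::real)) * exp (-1)"
      proof -
        have "(3 + exp (1::real)) * exp (-1) = 3 * exp (-1) + 1" by (simp add: distrib_right flip: exp_add)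
        moreover have "0 \<le> 3 * exp (-1::real)" by simp
        ultimately show ?thesis by linarith
      qed
      ultimately have "1 \<le> (3 + exp 1) * exp (- \<Theta>\<^sup>2 / 4)"
        by (smt (verit) exp_gt_zero mult_left_mono)
      moreover have "measure M {\<omega> \<in> space M. \<bar>gN \<omega> - f xstar\<bar> > (K1 + \<Theta> * K2) / sqrt (real N)} \<le> 1"
        by (rule prob_le_1)
      ultimately show ?thesis by linarith
    next
      case True
      have Hd: "\<And>x. x \<in> X \<Longrightarrow> (\<integral>\<^sup>+ s. ennreal (exp ((g x s - f x)\<^sup>2/M1\<^sup>2)) \<partial>P) \<le> ennreal (exp 1)"
        using H by auto
      have HA: "\<And>x. x \<in> X \<Longrightarrow> (AE s in P. norm (G x s - Gb x) \<le> M2)"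
        using H by (auto simp: Gb_def)
      have HD: "(\<integral>\<^sup>+ s. ennreal (exp ((norm (G x s - Gb x))\<^sup>2/M2\<^sup>2)) \<partial>P) \<le> ennreal (exp 1)"
        if x: "x \<in> X" for x
      proof -
        have "(\<integral>\<^sup>+ s. ennreal (exp ((norm (G x s - Gb x))\<^sup>2/M2\<^sup>2)) \<partial>P) \<le> (\<integral>\<^sup>+ s. ennreal (exp 1) \<partial>P)"
        proof (rule nn_integral_mono_AE)
          show "AE s in P. ennreal (exp ((norm (G x s - Gb x))\<^sup>2/M2\<^sup>2)) \<le> ennreal (exp 1)"
            using HA[OF x]
          proof eventually_elim
            case (elim s)
            then have "(norm (G x s - Gb x))\<^sup>2 \<le> M2\<^sup>2" by (intro power_mono) auto
            then have "(norm (G x s - Gb x))\<^sup>2/M2\<^sup>2 \<le> 1" using M12 by simp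
            then show ?case by simp
          qed
        qed
        also have "\<dots> = ennreal (exp 1)" by (simp add: P.emeasure_space_1)
        finally show ?thesis .
      qed
      let ?E1 = "E (\<psi>1 \<Theta>) (l1 \<Theta> * (\<Theta>*M1* sqrt N))" and ?E2 = "E (\<psi>2 \<Theta>) (l1 \<Theta> * (\<Theta>*M1* sqrt N))"
        and ?E5 = "E (\<psi>5 \<Theta>) ((\<Theta>\<^sup>2/(4*M2\<^sup>2)) * (\<Theta>*N*M2\<^sup>2))"
      have "measure M {\<omega> \<in> space M. \<bar>gN \<omega> - f xstar\<bar> > (K1 + \<Theta> * K2) / sqrt (real N)}
          \<le> measure M (?E1 \<union> ?E2 \<union> E3 \<Theta> \<union> ?E5)"
        by (intro finite_measure_mono sub[OF \<Theta>] c5[OF \<Theta>] sets.Un E1m E2m E3m E5m) auto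
      also have "\<dots> \<le> measure M ?E1 + measure M ?E2 + measure M (E3 \<Theta>) + measure M ?E5"
        by (intro order.trans[OF measure_Un_le] add_mono order.refl sets.Un E1m E2m E3m E5m)
      also have "\<dots> \<le> exp (- \<Theta>\<^sup>2/4) + exp (- \<Theta>\<^sup>2/4) + exp (- \<Theta>\<^sup>2/4) + exp 1 * exp (- \<Theta>\<^sup>2/4)"
      proof (intro add_mono b1 b2 b3 \<Theta> Hd HD)
        have "exp (- \<Theta>\<^sup>2/4) \<le> exp 1 * exp (- \<Theta>\<^sup>2/4)" by simp
        then show "measure M ?E5 \<le> exp 1 * exp (- \<Theta>\<^sup>2/4)" using b5[OF True HA] by linarith
      qed
      also have "\<dots> = (3 + exp 1) * exp (- \<Theta>\<^sup>2 / 4)" by (simp add: algebra_simps)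
      finally show ?thesis .
    qed
  qed
  show ?thesis
    using conjI[OF part1 part2] unfolding Let_def gN_def xs_def \<gamma>_def K1_def K2_def DX_def .
qed

end
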